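(* Let $M\in\mathbb{N}^*$, $\mathcal{L}_M=\{0,\dots,M\}$, $x_0\in\mathcal{L}_M$, $y_0\in\mathbb{N}$. Let $\lambda:\mathbb{R}_+\times\mathcal{L}_M\to\mathbb{R}_+$ be such that $t\mapsto\lambda(t,x)$ is càdlàg for every $x$, $\lambda(t,M)=0$ for all $t\ge 0$, and $\lambda$ is bounded on $[0,T]\times\mathcal{L}_M$ for every $T>0$. Let $f:\mathbb{R}\to\mathbb{R}$ be continuous with $0<\underline{f}\le f(x)\le\bar f<\infty$ for all $x$. Let $(\mu^k_{ij})_{i,j\ge 0}$, $k\in\mathcal{L}_M$, be intensity matrices satisfying: $\mu^k_{ij}\ge 0$ for $i\ne j$; $\mu^k_{ii}\le 0$; $\sum_{j\ge0}\mu^k_{ij}=0$ for all $i$; and $\sup_{i\in\mathbb{N}}|\mu^k_{ii}|<\infty$ for every $k$. Then the equation $P'(t)=\Psi(t,P(t))$, $P(0)=P_0$, admits a unique solution $P$ on $\mathbb{R}_+$ satisfying $P(t)\ge 0$ (componentwise) and $|P(t)|=1$ for all $t\ge 0$, where $\Psi$ and $P_0$ are as described in the context.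
   Context: Let $E$ be the set of real families $u=(u^i_j)_{0\le i\le M,\,j\ge 0}$, $E_+$ the subset with all $u^i_j\ge 0$, $E_+^*$ the subset with all $u^i_j>0$, and $|u|=\sum_{i=0}^M\sum_{j\ge0}|u^i_j|$; solutions are sought among summable families, i.e. $P(t)$ with $|P(t)|<\infty$. $P_0\in E$ is given by $(P_0)^{x_0}_{y_0}=1$ and $(P_0)^i_j=0$ for $(i,j)\ne(x_0,y_0)$. For $x\in E_+$ and $i\in\mathcal{L}_M$ set $\varphi(x,i)=\frac{\sum_{l\ge0}f(l)x^i_l}{\sum_{l\ge0}x^i_l}$, and define $\Psi:\mathbb{R}_+\times E_+\to E$ by $$(\Psi(t,x))^i_j=\sum_{k\ge0}\mu^i_{kj}x^i_k+\mathbf{1}_{\{i\ge1\}}\frac{\lambda(t,i-1)}{\varphi(x,i-1)}f(j)\,x^{i-1}_j-\mathbf{1}_{\{i\le M-1\}}\frac{\lambda(t,i)}{\varphi(x,i)}f(j)\,x^i_j,$$ where, when $x^i_l=0$ for all $l$ (so that $\varphi(x,i)$ is undefined), the terms $\frac{x^i_j}{\varphi(x,i)}$ are set equal to $0$ (the continuous extension from $E_+^*$, using $\underline f\le\varphi\le\bar f$ there). This equation is the Fokker–Planck equation for $p(t,i,j)=\mathbb{P}(X_t=i,Y_t=j)$ of a stochastic local intensity model where the loss counter $X$ jumps by $+1$ at rate $\lambda(t,X_t)f(Y_t)/\mathbb{E}[f(Y_t)\mid X_t]$ and $Y$ is a Markov chain on $\mathbb{N}$ with transition rates $\mu^{X_t}_{ij}$.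 *)

theory Defs
  imports "HOL-Analysis.Analysis"
begin

text \<open>Families u = (u^i_j), 0 <= i <= M, j >= 0, are represented as functions
  nat => nat => real (first argument i, second argument j); only i <= M matters.\<close>

type_synonym fam = "nat \<Rightarrow> nat \<Rightarrow> real"

definition summable_fam :: "nat \<Rightarrow> fam \<Rightarrow> bool" where
  "summable_fam M u \<longleftrightarrow> (\<forall>i\<le>M. summable (\<lambda>j. \<bar>u i j\<bar>))"

definition nonneg_fam :: "nat \<Rightarrow> fam \<Rightarrow> bool" where
  "nonneg_fam M u \<longleftrightarrow> (\<forall>i\<le>M. \<forall>j. 0 \<le> u i j)"

definition fam_norm :: "nat \<Rightarrow> fam \<Rightarrow> real" where
  "fam_norm M u = (\<Sum>i\<le>M. \<Sum>j. \<bar>u i j\<bar>)"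

definition P0 :: "nat \<Rightarrow> nat \<Rightarrow> fam" where
  "P0 x0 y0 = (\<lambda>i j. if i = x0 \<and> j = y0 then 1 else 0)"

definition phi :: "(real \<Rightarrow> real) \<Rightarrow> fam \<Rightarrow> nat \<Rightarrow> real" where
  "phi f x i = (\<Sum>l. f (real l) * x i l) / (\<Sum>l. x i l)"

text \<open>x^i_j / phi(x,i), set to 0 when x^i_l = 0 for all l (continuous extension).\<close>
definition frac :: "(real \<Rightarrow> real) \<Rightarrow> fam \<Rightarrow> nat \<Rightarrow> nat \<Rightarrow> real" where
  "frac f x i j = (if (\<forall>l. x i l = 0) then 0 else x i j / phi f x i)"

text \<open>Psi(t,x)^i_j; lam t k = lambda(t,k), mu k i j = mu^k_{ij}.\<close>
definition Psi :: "nat \<Rightarrow> (real \<Rightarrow> nat \<Rightarrow> real) \<Rightarrow> (real \<Rightarrow> real)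
    \<Rightarrow> (nat \<Rightarrow> nat \<Rightarrow> nat \<Rightarrow> real) \<Rightarrow> real \<Rightarrow> fam \<Rightarrow> fam" where
  "Psi M lam f mu t x = (\<lambda>i j.
      (\<Sum>k. mu i k j * x i k)
    + (if 1 \<le> i then lam t (i - 1) * f (real j) * frac f x (i - 1) j else 0)
    - (if i \<le> M - 1 then lam t i * f (real j) * frac f x i j else 0))"

text \<open>Solution of P'(t) = Psi(t,P(t)), P(0) = P_0 on R_+, understood in integral form
  P(t) = P_0 + int_0^t Psi(s,P(s)) ds (componentwise), with P taking values in the
  summable nonnegative families (the domain of Psi) and continuous for the norm |.|.\<close>
definition is_solution :: "nat \<Rightarrow> (real \<Rightarrow> nat \<Rightarrow> real) \<Rightarrow> (real \<Rightarrow> real)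
    \<Rightarrow> (nat \<Rightarrow> nat \<Rightarrow> nat \<Rightarrow> real) \<Rightarrow> nat \<Rightarrow> nat \<Rightarrow> (real \<Rightarrow> fam) \<Rightarrow> bool" where
  "is_solution M lam f mu x0 y0 P \<longleftrightarrow>
     (\<forall>t\<ge>0. nonneg_fam M (P t) \<and> summable_fam M (P t)) \<and>
     (\<forall>t\<ge>0. ((\<lambda>s. fam_norm M (\<lambda>i j. P s i j - P t i j)) \<longlongrightarrow> 0) (at t within {0..})) \<and>
     (\<forall>t\<ge>0. \<forall>i\<le>M. \<forall>j.
        ((\<lambda>s. Psi M lam f mu s (P s) i j) has_integral (P t i j - P0 x0 y0 i j)) {0..t})"

end

theory Submission
  imports Defs
begin


lemma bsum:
  fixes a :: "nat \<Rightarrow> real"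
  assumes "\<And>j. 0 \<le> a j" "\<And>N. (\<Sum>j<N. a j) \<le> B"
  shows "summable a \<and> suminf a \<le> B"
proof -
  have s: "summable a"
  proof (rule bounded_imp_summable[of a B])
    show "(\<Sum>k\<le>n. a k) \<le> B" for n using assms(2)[of "Suc n"] by (simp add: lessThan_Suc_atMost)
  qed (use assms in auto)
  then show ?thesis using suminf_le_const[OF s assms(2)] by auto
qed

lemma infsum_suminf_abs:
  fixes w :: "nat \<Rightarrow> real"
  assumes "summable (\<lambda>j. \<bar>w j\<bar>)"
  shows "infsum w UNIV = suminf w" "w summable_on UNIV"
proof -
  have "(w has_sum suminf w) UNIV"
    using norm_summable_imp_has_sum[of w "suminf w"] assms summable_rabs_cancel
    by (simp add: summable_sums)
  then show "infsum w UNIV = suminf w" "w summable_on UNIV"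
    by (auto simp: infsumI summable_on_def)
qed

lemma dswap:
  fixes w :: "nat \<Rightarrow> nat \<Rightarrow> real"
  assumes s1: "\<And>k. summable (\<lambda>j. \<bar>w k j\<bar>)" and s2: "summable (\<lambda>k. \<Sum>j. \<bar>w k j\<bar>)"
  shows "(\<Sum>j. \<Sum>k. w k j) = (\<Sum>k. \<Sum>j. w k j)"
proof -
  have n1: "infsum (\<lambda>j. norm (w k j)) UNIV = (\<Sum>j. \<bar>w k j\<bar>)" for k
    using infsum_suminf_abs(1)[of "\<lambda>j. \<bar>w k j\<bar>"] s1 by simp
  have a: "(\<lambda>y. norm (w k y)) summable_on UNIV" for k
    using infsum_suminf_abs(2)[of "\<lambda>j. \<bar>w k j\<bar>"] s1 by simp
  have b: "(\<lambda>k. norm (\<Sum>\<^sub>\<infinity>y. norm (w k y))) summable_on UNIV"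
    using infsum_suminf_abs(2)[of "\<lambda>k. \<Sum>j. \<bar>w k j\<bar>"] s2 n1
    by (simp add: suminf_nonneg s1)
  have "(\<lambda>x. norm ((\<lambda>(k,j). w k j) x)) summable_on UNIV \<times> UNIV"
    apply (rule Infinite_Sum.abs_summable_on_Sigma_iff[where f="\<lambda>(k,j). w k j" and A=UNIV and B="\<lambda>_. UNIV", THEN iffD2])
    using a b by simp
  then have ss: "(\<lambda>(k,j). w k j) summable_on UNIV \<times> UNIV"
    using abs_summable_summable by blast
  have sw: "infsum (\<lambda>k. infsum (\<lambda>j. w k j) UNIV) UNIV = infsum (\<lambda>j. infsum (\<lambda>k. w k j) UNIV) UNIV"
    by (rule infsum_swap_banach[OF ss])
  have c1: "summable (\<lambda>k. \<bar>w k j\<bar>)" for j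
  proof (rule summable_comparison_test[OF _ s2])
    show "\<exists>N. \<forall>n\<ge>N. norm \<bar>w n j\<bar> \<le> (\<Sum>j. \<bar>w n j\<bar>)"
      using sum_le_suminf[OF s1, of "{j}"] by auto
  qed
  have i1: "infsum (\<lambda>j. w k j) UNIV = (\<Sum>j. w k j)" for k using infsum_suminf_abs(1)[OF s1[of k]] by simp
  have i2: "infsum (\<lambda>k. w k j) UNIV = (\<Sum>k. w k j)" for j using infsum_suminf_abs(1)[OF c1[of j]] by simp
  have o1: "summable (\<lambda>k. \<bar>\<Sum>j. w k j\<bar>)"
    by (rule summable_comparison_test[OF _ s2]) (auto intro!: exI[of _ 0] summable_rabs s1)
  have o2: "summable (\<lambda>j. \<bar>\<Sum>k. w k j\<bar>)"
  proof -
    have "summable (\<lambda>j. \<bar>\<Sum>k. w k j\<bar>) \<and> (\<Sum>j. \<bar>\<Sum>k. w k j\<bar>) \<le> (\<Sum>k. \<Sum>j. \<bar>w k j\<bar>)"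
    proof (rule bsum)
      fix N
      have "(\<Sum>j<N. \<bar>\<Sum>k. w k j\<bar>) \<le> (\<Sum>j<N. \<Sum>k. \<bar>w k j\<bar>)"
        by (intro sum_mono summable_rabs c1)
      also have "\<dots> = (\<Sum>k. \<Sum>j<N. \<bar>w k j\<bar>)"
        by (rule suminf_sum[symmetric]) (use c1 in auto)
      also have "\<dots> \<le> (\<Sum>k. \<Sum>j. \<bar>w k j\<bar>)"
      proof (rule suminf_le)
        show "summable (\<lambda>k. \<Sum>j<N. \<bar>w k j\<bar>)" using c1 by (rule summable_sum)
      qed (use s1 s2 in \<open>auto intro: sum_le_suminf\<close>)
      finally show "(\<Sum>j<N. \<bar>\<Sum>k. w k j\<bar>) \<le> (\<Sum>k. \<Sum>j. \<bar>w k j\<bar>)" .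
    qed auto
    then show ?thesis by blast
  qed
  show ?thesis
    using sw i1 i2 infsum_suminf_abs(1)[OF o1] infsum_suminf_abs(1)[OF o2] by simp
qed


definition Ap :: "(nat \<Rightarrow> nat \<Rightarrow> real) \<Rightarrow> (nat \<Rightarrow> real) \<Rightarrow> nat \<Rightarrow> real" where
  "Ap q a j = (\<Sum>k. q k j * a k)"

locale qmat =
  fixes q :: "nat \<Rightarrow> nat \<Rightarrow> real" and C :: real
  assumes off: "\<And>i j. i \<noteq> j \<Longrightarrow> 0 \<le> q i j" and dg: "\<And>i. q i i \<le> 0"
    and rows: "\<And>i. (\<lambda>j. q i j) sums 0" and bd: "\<And>i. \<bar>q i i\<bar> \<le> C"
begin

lemma row_abs: "(\<lambda>j. \<bar>q i j\<bar>) sums (-2 * q i i)"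
proof -
  have e: "(\<lambda>j. \<bar>q i j\<bar>) = (\<lambda>j. q i j - (if j = i then 2 * q i i else 0))"
  proof (rule ext)
    fix j show "\<bar>q i j\<bar> = q i j - (if j = i then 2 * q i i else 0)"
      using off[of i j] dg[of i] by (cases "j = i") auto
  qed
  have "(\<lambda>j. q i j - (if j = i then 2 * q i i else 0)) sums (0 - 2 * q i i)"
    by (intro sums_diff rows) (rule sums_single)
  then show ?thesis by (simp add: e)
qed

lemma C_nonneg: "0 \<le> C" using bd[of 0] by simp

lemma row_summ: "summable (\<lambda>j. \<bar>q i j\<bar>)" using row_abs sums_summable by blast

lemma row_le: "(\<Sum>j. \<bar>q i j\<bar>) \<le> 2 * C"
  using sums_unique[OF row_abs[of i]] bd[of i] dg[of i] by simp

lemma entry_le: "\<bar>q i j\<bar> \<le> 2 * C"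
  using sum_le_suminf[OF row_summ[of i], of "{j}"] row_le[of i] by simp

lemma Ap_summ:
  assumes "summable (\<lambda>k. \<bar>a k\<bar>)"
  shows "summable (\<lambda>k. \<bar>q k j * a k\<bar>)"
proof (rule summable_comparison_test[OF _ summable_mult[OF assms, of "2*C"]])
  show "\<exists>N. \<forall>n\<ge>N. norm \<bar>q n j * a n\<bar> \<le> 2 * C * \<bar>a n\<bar>"
    using entry_le by (auto simp: abs_mult intro!: mult_right_mono)
qed

lemma Ap_lip:
  assumes "summable (\<lambda>k. \<bar>a k\<bar>)"
  shows "summable (\<lambda>j. \<bar>Ap q a j\<bar>) \<and> (\<Sum>j. \<bar>Ap q a j\<bar>) \<le> 2 * C * (\<Sum>k. \<bar>a k\<bar>)"
proof (rule bsum)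
  fix N
  have "(\<Sum>j<N. \<bar>Ap q a j\<bar>) \<le> (\<Sum>j<N. \<Sum>k. \<bar>q k j * a k\<bar>)"
    unfolding Ap_def by (intro sum_mono summable_rabs Ap_summ assms)
  also have "\<dots> = (\<Sum>k. \<Sum>j<N. \<bar>q k j * a k\<bar>)"
    by (rule suminf_sum[symmetric]) (use Ap_summ assms in auto)
  also have "\<dots> \<le> (\<Sum>k. 2 * C * \<bar>a k\<bar>)"
  proof (rule suminf_le)
    show "summable (\<lambda>k. \<Sum>j<N. \<bar>q k j * a k\<bar>)" using Ap_summ assms by (intro summable_sum) auto
    show "summable (\<lambda>k. 2 * C * \<bar>a k\<bar>)" using assms by (rule summable_mult)
    fix k
    have "(\<Sum>j<N. \<bar>q k j * a k\<bar>) = (\<Sum>j<N. \<bar>q k j\<bar>) * \<bar>a k\<bar>"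
      by (simp add: abs_mult sum_distrib_right)
    also have "\<dots> \<le> (\<Sum>j. \<bar>q k j\<bar>) * \<bar>a k\<bar>"
      by (intro mult_right_mono sum_le_suminf row_summ) auto
    also have "\<dots> \<le> 2 * C * \<bar>a k\<bar>"
      by (intro mult_right_mono row_le) auto
    finally show "(\<Sum>j<N. \<bar>q k j * a k\<bar>) \<le> 2 * C * \<bar>a k\<bar>" .
  qed
  also have "\<dots> = 2 * C * (\<Sum>k. \<bar>a k\<bar>)"
    using assms by (rule suminf_mult)
  finally show "(\<Sum>j<N. \<bar>Ap q a j\<bar>) \<le> 2 * C * (\<Sum>k. \<bar>a k\<bar>)" .
qed auto

lemma Ap_diff:
  assumes "summable (\<lambda>k. \<bar>a k\<bar>)" "summable (\<lambda>k. \<bar>b k\<bar>)"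
  shows "Ap q a j - Ap q b j = Ap q (\<lambda>k. a k - b k) j"
proof -
  have sa: "summable (\<lambda>k. q k j * a k)" by (rule summable_rabs_cancel[OF Ap_summ[OF assms(1)]])
  have sb: "summable (\<lambda>k. q k j * b k)" by (rule summable_rabs_cancel[OF Ap_summ[OF assms(2)]])
  show ?thesis unfolding Ap_def using suminf_diff[OF sa sb] by (simp add: algebra_simps)
qed

lemma Ap_nonneg:
  assumes "summable (\<lambda>k. \<bar>a k\<bar>)" "\<And>k. 0 \<le> a k" "a j = 0"
  shows "0 \<le> Ap q a j"
  unfolding Ap_def
proof (rule suminf_nonneg)
  show "summable (\<lambda>k. q k j * a k)" by (rule summable_rabs_cancel[OF Ap_summ[OF assms(1)]])
  show "0 \<le> q k j * a k" for k
    using off[of k j] assms by (cases "k = j") auto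
qed

lemma Ap_sum0:
  assumes "summable (\<lambda>k. \<bar>a k\<bar>)"
  shows "(\<Sum>j. Ap q a j) = 0"
proof -
  have s1: "summable (\<lambda>j. \<bar>q k j * a k\<bar>)" for k
    using summable_mult2[OF row_summ[of k], of "\<bar>a k\<bar>"] by (simp add: abs_mult)
  have e1: "(\<Sum>j. \<bar>q k j * a k\<bar>) = (\<Sum>j. \<bar>q k j\<bar>) * \<bar>a k\<bar>" for k
    using suminf_mult2[OF row_summ[of k], of "\<bar>a k\<bar>"] by (simp add: abs_mult)
  have s2: "summable (\<lambda>k. \<Sum>j. \<bar>q k j * a k\<bar>)"
  proof (rule summable_comparison_test[OF _ summable_mult[OF assms, of "2*C"]])
    show "\<exists>N. \<forall>n\<ge>N. norm (\<Sum>j. \<bar>q n j * a n\<bar>) \<le> 2 * C * \<bar>a n\<bar>"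
    proof (intro exI allI impI)
      fix n :: nat
      have "0 \<le> (\<Sum>j. \<bar>q n j\<bar>)" by (intro suminf_nonneg row_summ) auto
      then show "norm (\<Sum>j. \<bar>q n j * a n\<bar>) \<le> 2 * C * \<bar>a n\<bar>"
        using row_le[of n] by (subst e1) (simp add: abs_mult mult_right_mono)
    qed
  qed
  have "(\<Sum>j. Ap q a j) = (\<Sum>k. \<Sum>j. q k j * a k)"
    unfolding Ap_def by (rule dswap[OF s1 s2])
  also have "\<dots> = (\<Sum>k. 0)"
  proof (rule arg_cong[where f=suminf], rule ext)
    fix k
    have "(\<Sum>j. q k j * a k) = (\<Sum>j. q k j) * a k"
      by (rule suminf_mult2[symmetric]) (use rows sums_summable in blast)
    also have "\<dots> = 0" using sums_unique[OF rows[of k]] by simp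
    finally show "(\<Sum>j. q k j * a k) = 0" .
  qed
  finally show ?thesis by simp
qed

end

lemma core_ineq:
  fixes ma mb ga gb D fl fu :: real
  assumes fl: "0 < fl" and "0 < ma" "0 < mb" "fl * ma \<le> ga" "fl * mb \<le> gb" "mb \<le> ma"
    "\<bar>ma - mb\<bar> \<le> D" "\<bar>ga - gb\<bar> \<le> fu * D" "0 \<le> fu"
  shows "ma / ga * D + mb * \<bar>ma / ga - mb / gb\<bar> \<le> (2 / fl + fu / fl^2) * D"
proof -
  have D: "0 \<le> D" using assms(7) by linarith
  have "0 < fl * ma" "0 < fl * mb" using fl assms(2,3) by simp_all
  then have ga: "0 < ga" and gb: "0 < gb" using assms(4,5) by linarith+
  have h1: "ma / ga \<le> 1 / fl" using assms(4) fl ga by (simp add: field_simps)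
  have h2: "mb / ga \<le> 1 / fl" using h1 divide_right_mono[OF assms(6), of ga] ga by linarith
  have h3: "mb / gb \<le> 1 / fl" using assms(5) fl gb by (simp add: field_simps)
  have e: "ma / ga - mb / gb = ((ma - mb) * gb - mb * (ga - gb)) / (ga * gb)"
    using ga gb by (simp add: field_simps)
  have n: "\<bar>(ma - mb) * gb - mb * (ga - gb)\<bar> \<le> D * gb + mb * (fu * D)"
  proof -
    have "\<bar>(ma - mb) * gb - mb * (ga - gb)\<bar> \<le> \<bar>ma - mb\<bar> * gb + mb * \<bar>ga - gb\<bar>"
      using gb assms(3) abs_triangle_ineq4[of "(ma - mb) * gb" "mb * (ga - gb)"] by (simp add: abs_mult)
    also have "\<dots> \<le> D * gb + mb * (fu * D)"
      using assms gb by (intro add_mono mult_right_mono mult_left_mono) auto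
    finally show ?thesis .
  qed
  have "mb * \<bar>ma / ga - mb / gb\<bar> = mb * \<bar>(ma - mb) * gb - mb * (ga - gb)\<bar> / (ga * gb)"
    using ga gb by (simp add: e abs_divide)
  also have "\<dots> \<le> mb * (D * gb + mb * (fu * D)) / (ga * gb)"
    using n ga gb assms(3) by (intro divide_right_mono mult_left_mono) auto
  also have "\<dots> = D * (mb / ga) + fu * D * ((mb / ga) * (mb / gb))"
    using ga gb by (simp add: field_simps)
  also have "\<dots> \<le> D * (1/fl) + fu * D * ((1/fl) * (1/fl))"
    using h2 h3 D assms(9) ga gb assms(3) fl
    by (intro add_mono mult_left_mono mult_mono) auto
  finally have A: "mb * \<bar>ma / ga - mb / gb\<bar> \<le> D * (1/fl) + fu * D * ((1/fl) * (1/fl))" .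
  have B: "ma / ga * D \<le> 1/fl * D" using h1 D by (rule mult_right_mono)
  have "(2 / fl + fu / fl^2) * D = 1/fl * D + (D * (1/fl) + fu * D * ((1/fl) * (1/fl)))"
    by (simp add: field_simps power2_eq_square)
  then show ?thesis using A B by linarith
qed

definition hh :: "(real \<Rightarrow> real) \<Rightarrow> (nat \<Rightarrow> real) \<Rightarrow> real" where
  "hh f a = (if (\<forall>l. a l = 0) then 0 else (\<Sum>l. a l) / (\<Sum>l. f (real l) * a l))"

lemma frac_eq: "frac f x i j = x i j * hh f (x i)"
  by (simp add: frac_def phi_def hh_def)

definition nsl :: "(nat \<Rightarrow> real) \<Rightarrow> bool" where
  "nsl a \<longleftrightarrow> (\<forall>l. 0 \<le> a l) \<and> summable a"

lemma nsl_abs: "nsl a \<Longrightarrow> summable (\<lambda>l. \<bar>a l\<bar>)"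
  by (simp add: nsl_def)

lemma nsl_diff: "nsl a \<Longrightarrow> nsl b \<Longrightarrow> summable (\<lambda>l. \<bar>a l - b l\<bar>)"
proof (rule summable_comparison_test[OF _ summable_add[of a b]])
  assume a: "nsl a" and b: "nsl b"
  show "\<exists>N. \<forall>n\<ge>N. norm \<bar>a n - b n\<bar> \<le> a n + b n"
  proof (intro exI allI impI)
    fix n :: nat
    have "0 \<le> a n" "0 \<le> b n" using a b by (auto simp: nsl_def)
    then show "norm \<bar>a n - b n\<bar> \<le> a n + b n" by (simp add: abs_le_iff)
  qed
qed (auto simp: nsl_def)

locale fbnd =
  fixes f :: "real \<Rightarrow> real" and fl fu :: real
  assumes fl: "0 < fl" and fbl: "\<And>x. fl \<le> f x" and fbu: "\<And>x. f x \<le> fu"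
begin

lemma fu_pos: "0 < fu" using fl fbl[of 0] fbu[of 0] by linarith

lemma fa_summ: "nsl a \<Longrightarrow> summable (\<lambda>l. f (real l) * a l)"
  unfolding nsl_def
  by (rule summable_comparison_test[OF _ summable_mult[of a fu]])
     (auto intro!: exI[of _ 0] mult_right_mono fbu simp: abs_mult abs_of_nonneg fl fbl order.trans[OF less_imp_le[OF fl] fbl])

lemma g_bounds:
  assumes "nsl a"
  shows "fl * (\<Sum>l. a l) \<le> (\<Sum>l. f (real l) * a l) \<and> (\<Sum>l. f (real l) * a l) \<le> fu * (\<Sum>l. a l)"
proof -
  have s: "summable a" "\<And>l. 0 \<le> a l" using assms by (auto simp: nsl_def)
  have "fl * (\<Sum>l. a l) = (\<Sum>l. fl * a l)" by (rule suminf_mult[symmetric, OF s(1)])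
  also have "\<dots> \<le> (\<Sum>l. f (real l) * a l)"
    by (intro suminf_le summable_mult s fa_summ assms mult_right_mono fbl)
  finally have 1: "fl * (\<Sum>l. a l) \<le> (\<Sum>l. f (real l) * a l)" .
  have "(\<Sum>l. f (real l) * a l) \<le> (\<Sum>l. fu * a l)"
    by (intro suminf_le summable_mult s fa_summ assms mult_right_mono fbu)
  also have "\<dots> = fu * (\<Sum>l. a l)" by (rule suminf_mult[OF s(1)])
  finally show ?thesis using 1 by simp
qed

lemma m_pos: "nsl a \<Longrightarrow> \<not> (\<forall>l. a l = 0) \<Longrightarrow> 0 < (\<Sum>l. a l)"
  unfolding nsl_def using suminf_pos_iff[of a] by (metis order_less_le)

lemma hh_nz: "nsl a \<Longrightarrow> \<not> (\<forall>l. a l = 0) \<Longrightarrow> hh f a = (\<Sum>l. a l) / (\<Sum>l. f (real l) * a l)"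
  by (simp add: hh_def)

lemma hh_bnd:
  assumes "nsl a"
  shows "0 \<le> hh f a \<and> hh f a \<le> 1 / fl"
proof (cases "\<forall>l. a l = 0")
  case True then show ?thesis using fl by (simp add: hh_def)
next
  case False
  have m: "0 < (\<Sum>l. a l)" by (rule m_pos[OF assms False])
  have g: "fl * (\<Sum>l. a l) \<le> (\<Sum>l. f (real l) * a l)" using g_bounds[OF assms] by simp
  have "0 < fl * (\<Sum>l. a l)" using fl m by simp
  then have gp: "0 < (\<Sum>l. f (real l) * a l)" using g by linarith
  show ?thesis using m gp g fl by (simp add: hh_nz[OF assms False] field_simps)
qed

lemma hh_mass:
  assumes "nsl a"
  shows "(\<lambda>j. f (real j) * (a j * hh f a)) sums (\<Sum>l. a l)"
proof (cases "\<forall>l. a l = 0")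
  case True then show ?thesis by (simp add: hh_def)
next
  case False
  have m: "0 < (\<Sum>l. a l)" by (rule m_pos[OF assms False])
  have g: "fl * (\<Sum>l. a l) \<le> (\<Sum>l. f (real l) * a l)" using g_bounds[OF assms] by simp
  have "0 < fl * (\<Sum>l. a l)" using fl m by simp
  then have gp: "0 < (\<Sum>l. f (real l) * a l)" using g by linarith
  have "(\<lambda>j. f (real j) * a j * hh f a) sums ((\<Sum>l. f (real l) * a l) * hh f a)"
    by (intro sums_mult2 summable_sums fa_summ assms)
  then show ?thesis using gp by (simp add: hh_nz[OF assms False] mult.assoc)
qed

lemma diff_sum_le:
  assumes "nsl a" "nsl b"
  shows "\<bar>(\<Sum>l. a l) - (\<Sum>l. b l)\<bar> \<le> (\<Sum>l. \<bar>a l - b l\<bar>)"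
    "\<bar>(\<Sum>l. f (real l) * a l) - (\<Sum>l. f (real l) * b l)\<bar> \<le> fu * (\<Sum>l. \<bar>a l - b l\<bar>)"
proof -
  have sa: "summable a" "summable b" using assms by (auto simp: nsl_def)
  show "\<bar>(\<Sum>l. a l) - (\<Sum>l. b l)\<bar> \<le> (\<Sum>l. \<bar>a l - b l\<bar>)"
    using summable_rabs[OF nsl_diff[OF assms]] suminf_diff[OF sa] by simp
  have "(\<Sum>l. f (real l) * a l) - (\<Sum>l. f (real l) * b l) = (\<Sum>l. f (real l) * (a l - b l))"
    using suminf_diff[OF fa_summ[OF assms(1)] fa_summ[OF assms(2)]] by (simp add: algebra_simps)
  also have "\<bar>\<dots>\<bar> \<le> (\<Sum>l. \<bar>f (real l) * (a l - b l)\<bar>)"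
  proof (rule summable_rabs)
    show "summable (\<lambda>l. \<bar>f (real l) * (a l - b l)\<bar>)"
      by (rule summable_comparison_test[OF _ summable_mult[OF nsl_diff[OF assms], of fu]])
         (auto intro!: exI[of _ 0] mult_right_mono fbu simp: abs_mult order.trans[OF less_imp_le[OF fl] fbl])
  qed
  also have "\<dots> \<le> (\<Sum>l. fu * \<bar>a l - b l\<bar>)"
  proof (rule suminf_le)
    show "summable (\<lambda>l. \<bar>f (real l) * (a l - b l)\<bar>)"
      by (rule summable_comparison_test[OF _ summable_mult[OF nsl_diff[OF assms], of fu]])
         (auto intro!: exI[of _ 0] mult_right_mono fbu simp: abs_mult order.trans[OF less_imp_le[OF fl] fbl])
    show "summable (\<lambda>l. fu * \<bar>a l - b l\<bar>)" by (rule summable_mult[OF nsl_diff[OF assms]])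
  qed (auto intro!: mult_right_mono fbu simp: abs_mult order.trans[OF less_imp_le[OF fl] fbl])
  also have "\<dots> = fu * (\<Sum>l. \<bar>a l - b l\<bar>)" by (rule suminf_mult[OF nsl_diff[OF assms]])
  finally show "\<bar>(\<Sum>l. f (real l) * a l) - (\<Sum>l. f (real l) * b l)\<bar> \<le> fu * (\<Sum>l. \<bar>a l - b l\<bar>)" .
qed

definition "KF = 2 / fl + fu / fl^2"

lemma KF_ge: "1 / fl \<le> KF"
proof -
  have "0 \<le> fu / fl^2" using fl fu_pos by simp
  moreover have "1 / fl \<le> 2 / fl" using fl by (simp add: divide_right_mono)
  ultimately show ?thesis by (simp add: KF_def)
qed

lemma fr_lip_core:
  assumes a: "nsl a" and b: "nsl b" and mm: "(\<Sum>l. b l) \<le> (\<Sum>l. a l)"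
  shows "summable (\<lambda>j. \<bar>a j * hh f a - b j * hh f b\<bar>) \<and>
         (\<Sum>j. \<bar>a j * hh f a - b j * hh f b\<bar>) \<le> KF * (\<Sum>j. \<bar>a j - b j\<bar>)"
proof (cases "\<forall>l. b l = 0")
  case True
  have hb: "hh f b = 0" using True by (simp add: hh_def)
  have e: "(\<lambda>j. \<bar>a j * hh f a - b j * hh f b\<bar>) = (\<lambda>j. a j * hh f a)"
    using a hh_bnd[OF a] True by (auto simp: nsl_def hb abs_mult)
  have e2: "(\<lambda>j. \<bar>a j - b j\<bar>) = a" using a True by (auto simp: nsl_def)
  have sa: "summable a" using a by (simp add: nsl_def)
  have "(\<Sum>j. a j * hh f a) = (\<Sum>j. a j) * hh f a" by (rule suminf_mult2[symmetric, OF sa])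
  also have "\<dots> \<le> (\<Sum>j. a j) * (1 / fl)"
    using hh_bnd[OF a] a by (intro mult_left_mono suminf_nonneg) (auto simp: nsl_def)
  also have "\<dots> \<le> (\<Sum>j. a j) * KF"
    using KF_ge a by (intro mult_left_mono suminf_nonneg) (auto simp: nsl_def)
  finally have X: "(\<Sum>j. a j * hh f a) \<le> (\<Sum>j. a j) * KF" .
  have Y: "summable (\<lambda>j. a j * hh f a)" by (rule summable_mult2[OF sa])
  show ?thesis unfolding e e2 using X Y by (simp add: mult.commute)
next
  case False
  have mb: "0 < (\<Sum>l. b l)" by (rule m_pos[OF b False])
  then have ma: "0 < (\<Sum>l. a l)" using mm by linarith
  have anz: "\<not> (\<forall>l. a l = 0)"
  proof
    assume "\<forall>l. a l = 0" then have "a = (\<lambda>l. 0)" by auto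
    then show False using ma by simp
  qed
  define D where "D = (\<Sum>j. \<bar>a j - b j\<bar>)"
  have sD: "summable (\<lambda>j. \<bar>a j - b j\<bar>)" by (rule nsl_diff[OF a b])
  have sb: "summable b" using b by (simp add: nsl_def)
  have pt: "\<bar>a j * hh f a - b j * hh f b\<bar> \<le> \<bar>a j - b j\<bar> * hh f a + b j * \<bar>hh f a - hh f b\<bar>" for j
  proof -
    have "a j * hh f a - b j * hh f b = (a j - b j) * hh f a + b j * (hh f a - hh f b)"
      by (simp add: algebra_simps)
    moreover have "\<bar>(a j - b j) * hh f a + b j * (hh f a - hh f b)\<bar> \<le> \<bar>(a j - b j) * hh f a\<bar> + \<bar>b j * (hh f a - hh f b)\<bar>"
      by (rule abs_triangle_ineq)
    moreover have "\<bar>(a j - b j) * hh f a\<bar> = \<bar>a j - b j\<bar> * hh f a"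
      using hh_bnd[OF a] by (simp add: abs_mult)
    moreover have "\<bar>b j * (hh f a - hh f b)\<bar> = b j * \<bar>hh f a - hh f b\<bar>"
      using b by (simp add: abs_mult nsl_def)
    ultimately show ?thesis by simp
  qed
  have sR: "summable (\<lambda>j. \<bar>a j - b j\<bar> * hh f a + b j * \<bar>hh f a - hh f b\<bar>)"
    by (intro summable_add summable_mult2 summable_mult sD sb)
  have sL: "summable (\<lambda>j. \<bar>a j * hh f a - b j * hh f b\<bar>)"
    by (rule summable_comparison_test[OF _ sR]) (use pt in auto)
  have "(\<Sum>j. \<bar>a j * hh f a - b j * hh f b\<bar>) \<le> (\<Sum>j. \<bar>a j - b j\<bar> * hh f a + b j * \<bar>hh f a - hh f b\<bar>)"
    by (rule suminf_le[OF pt sL sR])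
  also have "\<dots> = D * hh f a + (\<Sum>l. b l) * \<bar>hh f a - hh f b\<bar>"
  proof -
    have s1: "summable (\<lambda>j. \<bar>a j - b j\<bar> * hh f a)" by (rule summable_mult2[OF sD])
    have s2: "summable (\<lambda>j. b j * \<bar>hh f a - hh f b\<bar>)" by (rule summable_mult2[OF sb])
    have "(\<Sum>j. \<bar>a j - b j\<bar> * hh f a + b j * \<bar>hh f a - hh f b\<bar>)
        = (\<Sum>j. \<bar>a j - b j\<bar> * hh f a) + (\<Sum>j. b j * \<bar>hh f a - hh f b\<bar>)"
      by (rule suminf_add[OF s1 s2, symmetric])
    also have "(\<Sum>j. \<bar>a j - b j\<bar> * hh f a) = D * hh f a"
      unfolding D_def by (rule suminf_mult2[OF sD, symmetric])
    also have "(\<Sum>j. b j * \<bar>hh f a - hh f b\<bar>) = (\<Sum>l. b l) * \<bar>hh f a - hh f b\<bar>"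
      by (rule suminf_mult2[OF sb, symmetric])
    finally show ?thesis .
  qed
  also have "\<dots> \<le> KF * D"
  proof -
    have "(\<Sum>l. a l) / (\<Sum>l. f (real l) * a l) * D + (\<Sum>l. b l) * \<bar>(\<Sum>l. a l) / (\<Sum>l. f (real l) * a l) - (\<Sum>l. b l) / (\<Sum>l. f (real l) * b l)\<bar>
        \<le> (2 / fl + fu / fl^2) * D"
      using core_ineq[OF fl ma mb _ _ mm diff_sum_le(1)[OF a b] diff_sum_le(2)[OF a b]] fu_pos g_bounds[OF a] g_bounds[OF b]
      unfolding D_def by simp
    then show ?thesis by (simp add: hh_nz[OF a anz] hh_nz[OF b False] KF_def mult.commute)
  qed
  finally show ?thesis using sL unfolding D_def by simp
qed

lemma fr_lip:
  assumes a: "nsl a" and b: "nsl b"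
  shows "summable (\<lambda>j. \<bar>a j * hh f a - b j * hh f b\<bar>) \<and>
         (\<Sum>j. \<bar>a j * hh f a - b j * hh f b\<bar>) \<le> KF * (\<Sum>j. \<bar>a j - b j\<bar>)"
proof (cases "(\<Sum>l. b l) \<le> (\<Sum>l. a l)")
  case True then show ?thesis by (rule fr_lip_core[OF a b])
next
  case False
  then have "summable (\<lambda>j. \<bar>b j * hh f b - a j * hh f a\<bar>) \<and>
         (\<Sum>j. \<bar>b j * hh f b - a j * hh f a\<bar>) \<le> KF * (\<Sum>j. \<bar>b j - a j\<bar>)"
    by (intro fr_lip_core[OF b a]) auto
  then show ?thesis by (simp add: abs_minus_commute)
qed

end




lemma fam_bound:
  fixes u :: fam
  assumes "\<And>N. (\<Sum>i\<le>M. \<Sum>j<N. \<bar>u i j\<bar>) \<le> B"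
  shows "summable_fam M u \<and> fam_norm M u \<le> B"
proof -
  have le: "(\<Sum>j<N. \<bar>u i j\<bar>) \<le> B" if "i \<le> M" for i N
  proof -
    have "(\<Sum>j<N. \<bar>u i j\<bar>) \<le> (\<Sum>i\<le>M. \<Sum>j<N. \<bar>u i j\<bar>)"
      using that by (intro member_le_sum) (auto intro: sum_nonneg)
    with assms[of N] show ?thesis by simp
  qed
  have s: "summable (\<lambda>j. \<bar>u i j\<bar>)" if "i \<le> M" for i
    using bsum[of "\<lambda>j. \<bar>u i j\<bar>" B] le[OF that] by auto
  have "(\<lambda>N. \<Sum>i\<le>M. \<Sum>j<N. \<bar>u i j\<bar>) \<longlonglongrightarrow> (\<Sum>i\<le>M. \<Sum>j. \<bar>u i j\<bar>)"
    by (intro tendsto_sum summable_LIMSEQ s) auto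
  then have "(\<Sum>i\<le>M. \<Sum>j. \<bar>u i j\<bar>) \<le> B"
    by (rule LIMSEQ_le_const2) (use assms in auto)
  then show ?thesis using s by (simp add: summable_fam_def fam_norm_def)
qed

lemma fam_partial:
  assumes "summable_fam M u"
  shows "(\<Sum>i\<le>M. \<Sum>j<N. \<bar>u i j\<bar>) \<le> fam_norm M u"
  unfolding fam_norm_def
  using assms by (intro sum_mono sum_le_suminf) (auto simp: summable_fam_def)

lemma lvl_nonneg: "summable_fam M u \<Longrightarrow> i \<le> M \<Longrightarrow> 0 \<le> (\<Sum>j. \<bar>u i j\<bar>)"
  unfolding summable_fam_def by (rule suminf_nonneg) auto

lemma fam_comp:
  assumes "summable_fam M u" "i \<le> M"
  shows "\<bar>u i j\<bar> \<le> fam_norm M u"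
proof -
  have s: "summable (\<lambda>j. \<bar>u i j\<bar>)" using assms by (simp add: summable_fam_def)
  have "\<bar>u i j\<bar> \<le> (\<Sum>j. \<bar>u i j\<bar>)"
    using sum_le_suminf[OF s, of "{j}"] by simp
  also have "\<dots> \<le> fam_norm M u"
    unfolding fam_norm_def
    by (rule member_le_sum) (use assms lvl_nonneg in auto)
  finally show ?thesis .
qed

lemma fam_norm_nonneg: "summable_fam M u \<Longrightarrow> 0 \<le> fam_norm M u"
  unfolding fam_norm_def by (rule sum_nonneg) (rule lvl_nonneg, auto)

lemma fam_diff_summ:
  assumes "summable_fam M u" "summable_fam M v"
  shows "summable_fam M (\<lambda>i j. u i j - v i j)"
  unfolding summable_fam_def
proof (intro allI impI)
  fix i assume i: "i \<le> M"
  have su: "summable (\<lambda>j. \<bar>u i j\<bar>)" and sv: "summable (\<lambda>j. \<bar>v i j\<bar>)"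
    using assms i by (auto simp: summable_fam_def)
  show "summable (\<lambda>j. \<bar>u i j - v i j\<bar>)"
  proof (rule summable_comparison_test[OF _ summable_add[OF su sv]])
    show "\<exists>N. \<forall>n\<ge>N. norm \<bar>u i n - v i n\<bar> \<le> \<bar>u i n\<bar> + \<bar>v i n\<bar>"
      by (auto intro!: exI[of _ 0])
  qed
qed

lemma fam_tri:
  assumes "summable_fam M u" "summable_fam M v" "summable_fam M w"
  shows "fam_norm M (\<lambda>i j. u i j - w i j) \<le> fam_norm M (\<lambda>i j. u i j - v i j) + fam_norm M (\<lambda>i j. v i j - w i j)"
proof -
  have "(\<Sum>i\<le>M. \<Sum>j<N. \<bar>u i j - w i j\<bar>) \<le> fam_norm M (\<lambda>i j. u i j - v i j) + fam_norm M (\<lambda>i j. v i j - w i j)" for N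
  proof -
    have "(\<Sum>i\<le>M. \<Sum>j<N. \<bar>u i j - w i j\<bar>) \<le> (\<Sum>i\<le>M. \<Sum>j<N. \<bar>u i j - v i j\<bar> + \<bar>v i j - w i j\<bar>)"
      by (intro sum_mono) auto
    also have "\<dots> = (\<Sum>i\<le>M. \<Sum>j<N. \<bar>u i j - v i j\<bar>) + (\<Sum>i\<le>M. \<Sum>j<N. \<bar>v i j - w i j\<bar>)"
      by (simp add: sum.distrib)
    also have "\<dots> \<le> fam_norm M (\<lambda>i j. u i j - v i j) + fam_norm M (\<lambda>i j. v i j - w i j)"
      using fam_partial[OF fam_diff_summ[OF assms(1,2)], of N] fam_partial[OF fam_diff_summ[OF assms(2,3)], of N]
      by simp
    finally show ?thesis .
  qed
  then show ?thesis using fam_bound[where u="\<lambda>i j. u i j - w i j"] by blast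
qed

lemma fam_norm_sym: "fam_norm M (\<lambda>i j. u i j - v i j) = fam_norm M (\<lambda>i j. v i j - u i j)"
  by (simp add: fam_norm_def abs_minus_commute)

lemma fam_norm_zero_diff: "fam_norm M (\<lambda>i j. u i j - 0) = fam_norm M u"
  by simp

definition pp :: "fam \<Rightarrow> fam" where "pp x = (\<lambda>i j. max (x i j) 0)"

lemma pp_nsl:
  assumes "summable_fam M x" "i \<le> M"
  shows "nsl (pp x i)"
proof -
  have s: "summable (\<lambda>j. \<bar>x i j\<bar>)" using assms by (simp add: summable_fam_def)
  have "summable (\<lambda>j. max (x i j) 0)"
  proof (rule summable_comparison_test[OF _ s])
    show "\<exists>N. \<forall>n\<ge>N. norm (max (x i n) 0) \<le> \<bar>x i n\<bar>" by (auto simp: max_def)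
  qed
  then show ?thesis by (simp add: nsl_def pp_def)
qed

lemma pp_contr: "\<bar>max a 0 - max b 0\<bar> \<le> \<bar>a - b :: real\<bar>"
  by (simp add: max_def abs_if)

lemma pp_summ: "summable_fam M x \<Longrightarrow> summable_fam M (pp x)"
  using pp_nsl by (simp add: summable_fam_def nsl_def)

lemma pp_lip:
  assumes "summable_fam M x" "summable_fam M y" "i \<le> M"
  shows "(\<Sum>j. \<bar>pp x i j - pp y i j\<bar>) \<le> (\<Sum>j. \<bar>x i j - y i j\<bar>)"
proof (rule suminf_le)
  show "summable (\<lambda>j. \<bar>pp x i j - pp y i j\<bar>)"
    by (rule nsl_diff[OF pp_nsl[OF assms(1,3)] pp_nsl[OF assms(2,3)]])
  show "summable (\<lambda>j. \<bar>x i j - y i j\<bar>)"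
    using fam_diff_summ[OF assms(1,2)] assms(3) by (simp add: summable_fam_def)
  show "\<bar>pp x i j - pp y i j\<bar> \<le> \<bar>x i j - y i j\<bar>" for j
    unfolding pp_def by (rule pp_contr)
qed



lemma lf_bound:
  fixes c z Lm fu r :: real
  assumes "0 \<le> c" "c \<le> Lm" "0 \<le> fr" "fr \<le> fu"
  shows "\<bar>c * fr * z\<bar> \<le> Lm * fu * \<bar>z\<bar>"
proof -
  have "\<bar>c * fr * z\<bar> = (c * fr) * \<bar>z\<bar>" using assms by (simp add: abs_mult)
  also have "\<dots> \<le> (Lm * fu) * \<bar>z\<bar>"
    using assms by (intro mult_right_mono mult_mono) auto
  finally show ?thesis .
qed

lemma shift_sum_le:
  fixes E :: "nat \<Rightarrow> real"
  assumes "1 \<le> M" "\<And>i. i \<le> M \<Longrightarrow> 0 \<le> E i"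
  shows "(\<Sum>i\<le>M. if 1 \<le> i then E (i - 1) else 0) \<le> (\<Sum>i\<le>M. E i)"
proof -
  obtain m where m: "M = Suc m" using assms(1) by (cases M) auto
  have "(\<Sum>i\<le>M. if 1 \<le> i then E (i - 1) else 0) = (\<Sum>i\<le>m. E i)"
    unfolding m by (subst sum.atMost_Suc_shift) simp
  also have "\<dots> \<le> (\<Sum>i\<le>M. E i)" unfolding m using assms(2)[of "Suc m"] m by simp
  finally show ?thesis .
qed

lemma rc_meas:
  fixes h :: "real \<Rightarrow> real"
  assumes rc: "\<And>t. 0 \<le> t \<Longrightarrow> continuous (at_right t) h"
  shows "h \<in> borel_measurable (lebesgue_on {0..T})"
proof -
  define g where "g s = h (max s 0)" for s
  define G where "G n s = g (real_of_int \<lceil>s * 2^n\<rceil> / 2^n)" for n :: nat and s :: real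
  have Gm: "G n \<in> borel_measurable borel" for n
  proof -
    have c: "(\<lambda>s::real. \<lceil>s * 2^n\<rceil>) \<in> measurable borel (count_space UNIV)"
      by measurable
    show ?thesis unfolding G_def
      by (rule measurable_compose_countable[where g="\<lambda>s. \<lceil>s * 2^n\<rceil>" and f="\<lambda>i s. g (real_of_int i / 2^n)"])
         (auto intro: c)
  qed
  then have Gm': "G n \<in> borel_measurable (lebesgue_on {0..T})" for n
    by (intro measurable_restrict_space1 measurable_completion) simp
  have conv: "(\<lambda>n. G n s) \<longlonglongrightarrow> h s" if "s \<in> {0..T}" for s
  proof (rule LIMSEQ_I)
    fix e :: real assume e: "0 < e"
    have s0: "0 \<le> s" using that by simp
    have "(h \<longlongrightarrow> h s) (at_right s)" using rc[OF s0] by (simp add: continuous_within)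
    then have "eventually (\<lambda>y. dist (h y) (h s) < e) (at_right s)" using e tendsto_iff by blast
    then obtain b where b: "b > s" "\<And>y. s < y \<Longrightarrow> y < b \<Longrightarrow> dist (h y) (h s) < e"
      by (auto simp: eventually_at_right_field)
    obtain N where N: "(1/2::real)^N < b - s" using real_arch_pow_inv[of "b - s" "1/2"] b by auto
    show "\<exists>N. \<forall>n\<ge>N. norm (G n s - h s) < e"
    proof (intro exI allI impI)
      fix n assume n: "N \<le> n"
      define r where "r = real_of_int \<lceil>s * 2^n\<rceil> / 2^n"
      have cc: "real_of_int \<lceil>s * 2^n\<rceil> - 1 < s * 2^n" "s * 2^n \<le> real_of_int \<lceil>s * 2^n\<rceil>"
        using ceiling_correct[of "s * 2^n"] by auto
      have r1: "s \<le> r" unfolding r_def using cc by (simp add: pos_le_divide_eq)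
      have "r < (s * 2^n + 1) / 2^n" unfolding r_def using cc by (intro divide_strict_right_mono) auto
      also have "\<dots> = s + (1/2)^n" by (simp add: field_simps power_one_over)
      finally have r2: "r < s + (1/2)^n" .
      have "(1/2::real)^n \<le> (1/2)^N" using n by (intro power_decreasing) auto
      then have r3: "r < b" using r2 N by linarith
      have mr: "max r 0 = r" using r1 s0 by linarith
      have Gr: "G n s = h r" unfolding G_def g_def r_def[symmetric] mr ..
      show "norm (G n s - h s) < e"
      proof (cases "r = s")
        case True then show ?thesis using Gr e by simp
      next
        case False then show ?thesis using Gr b(2)[of r] r1 r3 by (simp add: dist_norm)
      qed
    qed
  qed
  show ?thesis by (rule borel_measurable_LIMSEQ_real[OF _ Gm']) (use conv in simp)
qed

locale sys = fbnd f fl fu for f fl fu +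
  fixes M :: nat and lam :: "real \<Rightarrow> nat \<Rightarrow> real" and mu :: "nat \<Rightarrow> nat \<Rightarrow> nat \<Rightarrow> real"
    and C :: real and x0 y0 :: nat
  assumes M1: "1 \<le> M" and x0M: "x0 \<le> M"
    and lam_nonneg: "\<And>t x. 0 \<le> t \<Longrightarrow> x \<le> M \<Longrightarrow> 0 \<le> lam t x"
    and lam_rc: "\<And>x t. x \<le> M \<Longrightarrow> 0 \<le> t \<Longrightarrow> continuous (at_right t) (\<lambda>s. lam s x)"
    and lam_bdd: "\<And>T. 0 < T \<Longrightarrow> \<exists>Lm. \<forall>t\<in>{0..T}. \<forall>x\<le>M. \<bar>lam t x\<bar> \<le> Lm"
    and qm: "\<And>k. k \<le> M \<Longrightarrow> qmat (mu k) C"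
begin

definition Phi :: "real \<Rightarrow> fam \<Rightarrow> fam" where "Phi s x = Psi M lam f mu s (pp x)"

lemma Psi_eq: "Psi M lam f mu s y i j = Ap (mu i) (y i) j
   + (if 1 \<le> i then lam s (i-1) * f (real j) * (y (i-1) j * hh f (y (i-1))) else 0)
   - (if i \<le> M-1 then lam s i * f (real j) * (y i j * hh f (y i)) else 0)"
  by (simp add: Psi_def Ap_def frac_eq)

lemma C_nonneg: "0 \<le> C" using qmat.C_nonneg[OF qm[of 0]] by simp

lemma f_pos: "0 \<le> f r" using fl fbl[of r] by linarith

definition LL :: "real \<Rightarrow> real" where "LL Lm = 2 * C + 2 * Lm * fu * KF"

lemma Phi_lip:
  assumes x: "summable_fam M x" and y: "summable_fam M y"
    and lam: "\<And>k. k \<le> M \<Longrightarrow> 0 \<le> lam s k \<and> lam s k \<le> Lm"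
  shows "summable_fam M (\<lambda>i j. Phi s x i j - Phi s y i j) \<and>
     fam_norm M (\<lambda>i j. Phi s x i j - Phi s y i j) \<le> LL Lm * fam_norm M (\<lambda>i j. x i j - y i j)"
proof -
  define X where "X = pp x"
  define Y where "Y = pp y"
  have nX: "nsl (X i)" if "i \<le> M" for i using pp_nsl[OF x that] by (simp add: X_def)
  have nY: "nsl (Y i)" if "i \<le> M" for i using pp_nsl[OF y that] by (simp add: Y_def)
  define E where "E i = (\<Sum>j. \<bar>X i j - Y i j\<bar>)" for i
  define Fd where "Fd i j = X i j * hh f (X i) - Y i j * hh f (Y i)" for i j
  have L0: "0 \<le> Lm" using lam[of 0] by auto
  have KF0: "0 \<le> KF" using KF_ge fl by (smt (verit) divide_pos_pos)
  have E0: "0 \<le> E i" if "i \<le> M" for i unfolding E_def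
    by (rule suminf_nonneg[OF nsl_diff[OF nX[OF that] nY[OF that]]]) auto
  have pt: "\<bar>Phi s x i j - Phi s y i j\<bar> \<le> \<bar>Ap (mu i) (\<lambda>k. X i k - Y i k) j\<bar>
      + (if 1 \<le> i then Lm * fu * \<bar>Fd (i-1) j\<bar> else 0) + Lm * fu * \<bar>Fd i j\<bar>" if i: "i \<le> M" for i j
  proof -
    have ad: "Ap (mu i) (X i) j - Ap (mu i) (Y i) j = Ap (mu i) (\<lambda>k. X i k - Y i k) j"
      by (rule qmat.Ap_diff[OF qm[OF i] nsl_abs[OF nX[OF i]] nsl_abs[OF nY[OF i]]])
    have e: "Phi s x i j - Phi s y i j = Ap (mu i) (\<lambda>k. X i k - Y i k) j
      + (if 1 \<le> i then lam s (i-1) * f (real j) * Fd (i-1) j else 0)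
      - (if i \<le> M-1 then lam s i * f (real j) * Fd i j else 0)"
      unfolding Phi_def Psi_eq X_def[symmetric] Y_def[symmetric] Fd_def ad[symmetric]
      by (simp add: algebra_simps)
    have b1: "\<bar>(if 1 \<le> i then lam s (i-1) * f (real j) * Fd (i-1) j else 0)\<bar>
        \<le> (if 1 \<le> i then Lm * fu * \<bar>Fd (i-1) j\<bar> else 0)"
      using lam[of "i-1"] i f_pos fbu by (auto intro!: lf_bound)
    have b2: "\<bar>(if i \<le> M-1 then lam s i * f (real j) * Fd i j else 0)\<bar> \<le> Lm * fu * \<bar>Fd i j\<bar>"
      using lam[of i] i f_pos fbu L0 fu_pos by (auto intro!: lf_bound)
    show ?thesis unfolding e using b1 b2 by linarith
  qed
  have lvl: "(\<Sum>j<N. \<bar>Phi s x i j - Phi s y i j\<bar>) \<le> 2 * C * E i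
      + (if 1 \<le> i then Lm * fu * (KF * E (i-1)) else 0) + Lm * fu * (KF * E i)" if i: "i \<le> M" for i N
  proof -
    have sd: "summable (\<lambda>k. \<bar>X i k - Y i k\<bar>)" by (rule nsl_diff[OF nX[OF i] nY[OF i]])
    have A: "(\<Sum>j<N. \<bar>Ap (mu i) (\<lambda>k. X i k - Y i k) j\<bar>) \<le> 2 * C * E i"
    proof -
      have "summable (\<lambda>j. \<bar>Ap (mu i) (\<lambda>k. X i k - Y i k) j\<bar>) \<and>
          (\<Sum>j. \<bar>Ap (mu i) (\<lambda>k. X i k - Y i k) j\<bar>) \<le> 2 * C * (\<Sum>k. \<bar>X i k - Y i k\<bar>)"
        by (rule qmat.Ap_lip[OF qm[OF i] sd])
      then show ?thesis unfolding E_def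
        by (meson abs_ge_zero order_trans sum_le_suminf finite_lessThan)
    qed
    have Fb: "(\<Sum>j<N. \<bar>Fd k j\<bar>) \<le> KF * E k" if k: "k \<le> M" for k
    proof -
      have "summable (\<lambda>j. \<bar>Fd k j\<bar>) \<and> (\<Sum>j. \<bar>Fd k j\<bar>) \<le> KF * E k"
        unfolding Fd_def E_def by (rule fr_lip[OF nX[OF k] nY[OF k]])
      then show ?thesis
        by (meson abs_ge_zero order_trans sum_le_suminf finite_lessThan)
    qed
    have B: "(\<Sum>j<N. (if 1 \<le> i then Lm * fu * \<bar>Fd (i-1) j\<bar> else 0)) \<le> (if 1 \<le> i then Lm * fu * (KF * E (i-1)) else 0)"
    proof (cases "1 \<le> i")
      case True
      have "(\<Sum>j<N. Lm * fu * \<bar>Fd (i-1) j\<bar>) = Lm * fu * (\<Sum>j<N. \<bar>Fd (i-1) j\<bar>)"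
        by (simp add: sum_distrib_left)
      also have "\<dots> \<le> Lm * fu * (KF * E (i-1))"
        using Fb[of "i-1"] i L0 fu_pos by (intro mult_left_mono) auto
      finally show ?thesis using True by simp
    qed simp
    have Cc: "(\<Sum>j<N. Lm * fu * \<bar>Fd i j\<bar>) \<le> Lm * fu * (KF * E i)"
    proof -
      have "(\<Sum>j<N. Lm * fu * \<bar>Fd i j\<bar>) = Lm * fu * (\<Sum>j<N. \<bar>Fd i j\<bar>)"
        by (simp add: sum_distrib_left)
      also have "\<dots> \<le> Lm * fu * (KF * E i)"
        using Fb[OF i] L0 fu_pos by (intro mult_left_mono) auto
      finally show ?thesis .
    qed
    have "(\<Sum>j<N. \<bar>Phi s x i j - Phi s y i j\<bar>) \<le> (\<Sum>j<N. \<bar>Ap (mu i) (\<lambda>k. X i k - Y i k) j\<bar>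
      + (if 1 \<le> i then Lm * fu * \<bar>Fd (i-1) j\<bar> else 0) + Lm * fu * \<bar>Fd i j\<bar>)"
      by (rule sum_mono) (rule pt[OF i])
    also have "\<dots> = (\<Sum>j<N. \<bar>Ap (mu i) (\<lambda>k. X i k - Y i k) j\<bar>)
      + (\<Sum>j<N. (if 1 \<le> i then Lm * fu * \<bar>Fd (i-1) j\<bar> else 0)) + (\<Sum>j<N. Lm * fu * \<bar>Fd i j\<bar>)"
      by (simp add: sum.distrib)
    finally show ?thesis using A B Cc by linarith
  qed
  have tot: "(\<Sum>i\<le>M. \<Sum>j<N. \<bar>Phi s x i j - Phi s y i j\<bar>) \<le> LL Lm * fam_norm M (\<lambda>i j. x i j - y i j)" for N
  proof -
    have "(\<Sum>i\<le>M. \<Sum>j<N. \<bar>Phi s x i j - Phi s y i j\<bar>) \<le> (\<Sum>i\<le>M. 2 * C * E i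
      + (if 1 \<le> i then Lm * fu * (KF * E (i-1)) else 0) + Lm * fu * (KF * E i))"
      by (rule sum_mono) (rule lvl, simp)
    also have "\<dots> = 2 * C * (\<Sum>i\<le>M. E i) + Lm * fu * KF * (\<Sum>i\<le>M. if 1 \<le> i then E (i-1) else 0)
        + Lm * fu * KF * (\<Sum>i\<le>M. E i)"
    proof -
      have "(\<Sum>i\<le>M. 2 * C * E i + (if 1 \<le> i then Lm * fu * (KF * E (i-1)) else 0) + Lm * fu * (KF * E i))
          = (\<Sum>i\<le>M. 2 * C * E i + Lm * fu * KF * (if 1 \<le> i then E (i-1) else 0) + Lm * fu * KF * E i)"
        by (rule sum.cong) auto
      also have "\<dots> = (\<Sum>i\<le>M. 2 * C * E i) + (\<Sum>i\<le>M. Lm * fu * KF * (if 1 \<le> i then E (i-1) else 0)) + (\<Sum>i\<le>M. Lm * fu * KF * E i)"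
        by (simp only: sum.distrib)
      also have "\<dots> = 2 * C * (\<Sum>i\<le>M. E i) + Lm * fu * KF * (\<Sum>i\<le>M. if 1 \<le> i then E (i-1) else 0)
        + Lm * fu * KF * (\<Sum>i\<le>M. E i)"
        by (simp only: sum_distrib_left)
      finally show ?thesis .
    qed
    also have "\<dots> \<le> 2 * C * (\<Sum>i\<le>M. E i) + Lm * fu * KF * (\<Sum>i\<le>M. E i) + Lm * fu * KF * (\<Sum>i\<le>M. E i)"
      using shift_sum_le[of M E, OF M1 E0] L0 fu_pos KF0 C_nonneg by (intro add_mono mult_left_mono) auto
    also have "\<dots> = LL Lm * (\<Sum>i\<le>M. E i)" by (simp add: LL_def algebra_simps)
    also have "\<dots> \<le> LL Lm * fam_norm M (\<lambda>i j. x i j - y i j)"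
    proof (rule mult_left_mono)
      show "(\<Sum>i\<le>M. E i) \<le> fam_norm M (\<lambda>i j. x i j - y i j)"
        unfolding fam_norm_def E_def X_def Y_def
        by (rule sum_mono) (rule pp_lip[OF x y], simp)
      show "0 \<le> LL Lm" unfolding LL_def using C_nonneg L0 fu_pos KF0 by simp
    qed
    finally show ?thesis .
  qed
  show ?thesis using fam_bound[where u="\<lambda>i j. Phi s x i j - Phi s y i j"] tot by blast
qed


definition good :: "(real \<Rightarrow> fam) \<Rightarrow> bool" where
  "good x \<longleftrightarrow> (\<forall>t\<ge>0. summable_fam M (x t)) \<and>
     (\<forall>t\<ge>0. ((\<lambda>s. fam_norm M (\<lambda>i j. x s i j - x t i j)) \<longlongrightarrow> 0) (at t within {0..}))"

lemma lam_bnd: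
  assumes "0 < T"
  shows "\<exists>Lm. 0 \<le> Lm \<and> (\<forall>s\<in>{0..T}. \<forall>k\<le>M. 0 \<le> lam s k \<and> lam s k \<le> Lm)"
proof -
  obtain Lm where L: "\<forall>t\<in>{0..T}. \<forall>x\<le>M. \<bar>lam t x\<bar> \<le> Lm" using lam_bdd[OF assms] by blast
  show ?thesis
    by (rule exI[of _ "max Lm 0"]) (use L lam_nonneg in fastforce)
qed

lemma Phi_zero: "Phi s (\<lambda>i j. 0) = (\<lambda>i j. 0)"
  by (intro ext) (simp add: Phi_def Psi_eq pp_def Ap_def hh_def)

lemma zero_summ: "summable_fam M (\<lambda>i j. 0)" by (simp add: summable_fam_def)

lemma KF_nonneg: "0 \<le> KF"
proof -
  have "0 < 1 / fl" using fl by simp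
  then show ?thesis using KF_ge by linarith
qed

lemma LL_nonneg: "0 \<le> Lm \<Longrightarrow> 0 \<le> LL Lm"
  unfolding LL_def using C_nonneg fu_pos KF_nonneg by simp

lemma Phi_bnd:
  assumes x: "summable_fam M x"
    and lam: "\<And>k. k \<le> M \<Longrightarrow> 0 \<le> lam s k \<and> lam s k \<le> Lm"
  shows "summable_fam M (Phi s x) \<and> fam_norm M (Phi s x) \<le> LL Lm * fam_norm M x"
  using Phi_lip[OF x zero_summ lam] by (simp add: Phi_zero)

lemma cont_cmp:
  assumes g: "good x"
    and c: "\<And>s t. 0 \<le> s \<Longrightarrow> 0 \<le> t \<Longrightarrow> \<bar>c s - c t\<bar> \<le> K * fam_norm M (\<lambda>i j. x s i j - x t i j)"
  shows "continuous_on {0..} c"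
  unfolding continuous_on_def
proof (intro ballI)
  fix t :: real assume t: "t \<in> {0..}"
  have "((\<lambda>s. K * fam_norm M (\<lambda>i j. x s i j - x t i j)) \<longlongrightarrow> K * 0) (at t within {0..})"
    using g t by (intro tendsto_mult tendsto_const) (auto simp: good_def)
  then have G0: "((\<lambda>s. K * fam_norm M (\<lambda>i j. x s i j - x t i j)) \<longlongrightarrow> 0) (at t within {0..})" by simp
  have "((\<lambda>s. c s - c t) \<longlongrightarrow> 0) (at t within {0..})"
  proof (rule Lim_null_comparison[OF _ G0])
    show "eventually (\<lambda>s. norm (c s - c t) \<le> K * fam_norm M (\<lambda>i j. x s i j - x t i j)) (at t within {0..})"
      unfolding eventually_at_filter
    proof (rule always_eventually, intro allI impI)
      fix s assume "s \<noteq> t" "s \<in> {0..}"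
      then show "norm (c s - c t) \<le> K * fam_norm M (\<lambda>i j. x s i j - x t i j)" using c[of s t] t by simp
    qed
  qed
  then show "(c \<longlongrightarrow> c t) (at t within {0..})" by (rule LIM_zero_cancel)
qed

lemma lvl_le: "summable_fam M u \<Longrightarrow> k \<le> M \<Longrightarrow> (\<Sum>j. \<bar>u k j\<bar>) \<le> fam_norm M u"
  unfolding fam_norm_def by (rule member_le_sum) (use lvl_nonneg in auto)

lemma nrm_cont:
  assumes g: "good x"
  shows "continuous_on {0..} (\<lambda>s. fam_norm M (x s))"
proof (rule cont_cmp[OF g, where K=1])
  fix s t :: real assume s: "0 \<le> s" and t: "0 \<le> t"
  have xs: "summable_fam M (x s)" and xt: "summable_fam M (x t)" using g s t by (auto simp: good_def)
  have 1: "fam_norm M (x s) \<le> fam_norm M (\<lambda>i j. x s i j - x t i j) + fam_norm M (x t)"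
    using fam_tri[OF xs xt zero_summ] by simp
  have 2: "fam_norm M (x t) \<le> fam_norm M (\<lambda>i j. x t i j - x s i j) + fam_norm M (x s)"
    using fam_tri[OF xt xs zero_summ] by simp
  show "\<bar>fam_norm M (x s) - fam_norm M (x t)\<bar> \<le> 1 * fam_norm M (\<lambda>i j. x s i j - x t i j)"
    using 1 2 fam_norm_sym[of M "x s" "x t"] by simp
qed

lemma nrm_bounded:
  assumes g: "good x"
  shows "\<exists>B. \<forall>s\<in>{0..T}. fam_norm M (x s) \<le> B"
proof -
  have "continuous_on {0..T} (\<lambda>s. fam_norm M (x s))"
    by (rule continuous_on_subset[OF nrm_cont[OF g]]) auto
  then have "bounded ((\<lambda>s. fam_norm M (x s)) ` {0..T})"
    by (intro compact_imp_bounded compact_continuous_image) auto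
  then obtain B where B: "\<forall>y\<in>(\<lambda>s. fam_norm M (x s)) ` {0..T}. norm y \<le> B"
    unfolding bounded_iff by blast
  show ?thesis
  proof (intro exI ballI)
    fix s assume "s \<in> {0..T}"
    then have "norm (fam_norm M (x s)) \<le> B" using B by blast
    then show "fam_norm M (x s) \<le> B" by simp
  qed
qed

lemma comp_cont:
  assumes g: "good x" and i: "i \<le> M"
  shows "continuous_on {0..} (\<lambda>s. x s i j)"
proof (rule cont_cmp[OF g, where K=1])
  fix s t :: real assume s: "0 \<le> s" and t: "0 \<le> t"
  have "summable_fam M (\<lambda>i j. x s i j - x t i j)"
    using g s t by (intro fam_diff_summ) (auto simp: good_def)
  from fam_comp[OF this i, of j] show "\<bar>x s i j - x t i j\<bar> \<le> 1 * fam_norm M (\<lambda>i j. x s i j - x t i j)"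
    by simp
qed

lemma cA_cont:
  assumes g: "good x" and i: "i \<le> M"
  shows "continuous_on {0..} (\<lambda>s. Ap (mu i) (pp (x s) i) j)"
proof (rule cont_cmp[OF g, where K="2 * C"])
  fix s t :: real assume s: "0 \<le> s" and t: "0 \<le> t"
  have xs: "summable_fam M (x s)" and xt: "summable_fam M (x t)" using g s t by (auto simp: good_def)
  have sd: "summable (\<lambda>k. \<bar>pp (x s) i k - pp (x t) i k\<bar>)"
    by (rule nsl_diff[OF pp_nsl[OF xs i] pp_nsl[OF xt i]])
  have "\<bar>Ap (mu i) (pp (x s) i) j - Ap (mu i) (pp (x t) i) j\<bar> = \<bar>Ap (mu i) (\<lambda>k. pp (x s) i k - pp (x t) i k) j\<bar>"
    using qmat.Ap_diff[OF qm[OF i] nsl_abs[OF pp_nsl[OF xs i]] nsl_abs[OF pp_nsl[OF xt i]]] by simp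
  also have "\<dots> \<le> (\<Sum>j. \<bar>Ap (mu i) (\<lambda>k. pp (x s) i k - pp (x t) i k) j\<bar>)"
    using qmat.Ap_lip[OF qm[OF i] sd] sum_le_suminf[of _ "{j}"] by fastforce
  also have "\<dots> \<le> 2 * C * (\<Sum>k. \<bar>pp (x s) i k - pp (x t) i k\<bar>)"
    using qmat.Ap_lip[OF qm[OF i] sd] by blast
  also have "\<dots> \<le> 2 * C * (\<Sum>k. \<bar>x s i k - x t i k\<bar>)"
    using pp_lip[OF xs xt i] C_nonneg by (intro mult_left_mono) auto
  also have "\<dots> \<le> 2 * C * fam_norm M (\<lambda>i j. x s i j - x t i j)"
    using lvl_le[OF fam_diff_summ[OF xs xt] i] C_nonneg by (intro mult_left_mono) auto
  finally show "\<bar>Ap (mu i) (pp (x s) i) j - Ap (mu i) (pp (x t) i) j\<bar> \<le> 2 * C * fam_norm M (\<lambda>i j. x s i j - x t i j)" .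
qed

lemma cF_cont:
  assumes g: "good x" and i: "i \<le> M"
  shows "continuous_on {0..} (\<lambda>s. pp (x s) i j * hh f (pp (x s) i))"
proof (rule cont_cmp[OF g, where K="KF"])
  fix s t :: real assume s: "0 \<le> s" and t: "0 \<le> t"
  have xs: "summable_fam M (x s)" and xt: "summable_fam M (x t)" using g s t by (auto simp: good_def)
  have L: "summable (\<lambda>j. \<bar>pp (x s) i j * hh f (pp (x s) i) - pp (x t) i j * hh f (pp (x t) i)\<bar>) \<and>
      (\<Sum>j. \<bar>pp (x s) i j * hh f (pp (x s) i) - pp (x t) i j * hh f (pp (x t) i)\<bar>) \<le> KF * (\<Sum>j. \<bar>pp (x s) i j - pp (x t) i j\<bar>)"
    by (rule fr_lip[OF pp_nsl[OF xs i] pp_nsl[OF xt i]])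
  have KF0: "0 \<le> KF" using KF_ge fl by (smt (verit) divide_pos_pos)
  have "\<bar>pp (x s) i j * hh f (pp (x s) i) - pp (x t) i j * hh f (pp (x t) i)\<bar>
      \<le> (\<Sum>j. \<bar>pp (x s) i j * hh f (pp (x s) i) - pp (x t) i j * hh f (pp (x t) i)\<bar>)"
    using L sum_le_suminf[of _ "{j}"] by fastforce
  also have "\<dots> \<le> KF * (\<Sum>k. \<bar>pp (x s) i k - pp (x t) i k\<bar>)" using L by blast
  also have "\<dots> \<le> KF * (\<Sum>k. \<bar>x s i k - x t i k\<bar>)"
    using pp_lip[OF xs xt i] KF0 by (intro mult_left_mono) auto
  also have "\<dots> \<le> KF * fam_norm M (\<lambda>i j. x s i j - x t i j)"
    using lvl_le[OF fam_diff_summ[OF xs xt] i] KF0 by (intro mult_left_mono) auto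
  finally show "\<bar>pp (x s) i j * hh f (pp (x s) i) - pp (x t) i j * hh f (pp (x t) i)\<bar> \<le> KF * fam_norm M (\<lambda>i j. x s i j - x t i j)" .
qed

lemma cont_meas:
  fixes c :: "real \<Rightarrow> real"
  assumes "continuous_on {0..} c"
  shows "c \<in> borel_measurable (lebesgue_on {0..t})"
proof (rule continuous_imp_measurable_on_sets_lebesgue[OF continuous_on_subset[OF assms]])
  show "{0..t} \<in> sets lebesgue" by simp
qed auto

lemma Phi_meas:
  assumes g: "good x" and i: "i \<le> M"
  shows "(\<lambda>s. Phi s (x s) i j) \<in> borel_measurable (lebesgue_on {0..t})"
proof -
  have e: "(\<lambda>s. Phi s (x s) i j) = (\<lambda>s. Ap (mu i) (pp (x s) i) j
   + (if 1 \<le> i then lam s (i-1) * f (real j) * (pp (x s) (i-1) j * hh f (pp (x s) (i-1))) else 0)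
   - (if i \<le> M-1 then lam s i * f (real j) * (pp (x s) i j * hh f (pp (x s) i)) else 0))"
    by (simp add: Phi_def Psi_eq)
  have mA: "(\<lambda>s. Ap (mu i) (pp (x s) i) j) \<in> borel_measurable (lebesgue_on {0..t})"
    by (rule cont_meas[OF cA_cont[OF g i]])
  have mL: "(\<lambda>s. lam s k) \<in> borel_measurable (lebesgue_on {0..t})" if "k \<le> M" for k
    by (rule rc_meas) (rule lam_rc[OF that])
  have mF: "(\<lambda>s. pp (x s) k j * hh f (pp (x s) k)) \<in> borel_measurable (lebesgue_on {0..t})" if "k \<le> M" for k
    by (rule cont_meas[OF cF_cont[OF g that]])
  have m1: "(\<lambda>s. (if 1 \<le> i then lam s (i-1) * f (real j) * (pp (x s) (i-1) j * hh f (pp (x s) (i-1))) else 0))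
     \<in> borel_measurable (lebesgue_on {0..t})"
  proof (cases "1 \<le> i")
    case True
    have "(\<lambda>s. lam s (i-1) * f (real j) * (pp (x s) (i-1) j * hh f (pp (x s) (i-1))))
     \<in> borel_measurable (lebesgue_on {0..t})"
      using i by (intro borel_measurable_times borel_measurable_const mL mF) auto
    then show ?thesis using True by simp
  qed simp
  have m2: "(\<lambda>s. (if i \<le> M-1 then lam s i * f (real j) * (pp (x s) i j * hh f (pp (x s) i)) else 0))
     \<in> borel_measurable (lebesgue_on {0..t})"
  proof (cases "i \<le> M-1")
    case True
    have "(\<lambda>s. lam s i * f (real j) * (pp (x s) i j * hh f (pp (x s) i)))
     \<in> borel_measurable (lebesgue_on {0..t})"
      using i by (intro borel_measurable_times borel_measurable_const mL mF) auto
    then show ?thesis using True by simp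
  qed simp
  show ?thesis unfolding e by (intro borel_measurable_diff borel_measurable_add mA m1 m2)
qed

lemma Phi_int:
  assumes g: "good x" and i: "i \<le> M" and t: "0 \<le> t"
  shows "(\<lambda>s. Phi s (x s) i j) absolutely_integrable_on {0..t}"
proof -
  obtain Lm where Lm: "0 \<le> Lm" "\<forall>s\<in>{0..t+1}. \<forall>k\<le>M. 0 \<le> lam s k \<and> lam s k \<le> Lm"
    using lam_bnd[of "t+1"] t by auto
  obtain B where B: "\<forall>s\<in>{0..t}. fam_norm M (x s) \<le> B" using nrm_bounded[OF g] by blast
  have LL0: "0 \<le> LL Lm" by (rule LL_nonneg[OF Lm(1)])
  show ?thesis
  proof (rule measurable_bounded_by_integrable_imp_absolutely_integrable[OF Phi_meas[OF g i]])
    show "(\<lambda>s. LL Lm * B) integrable_on {0..t}" by (rule integrable_const_ivl)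
    fix s assume s: "s \<in> {0..t}"
    have xs: "summable_fam M (x s)" using g s by (auto simp: good_def)
    have P: "summable_fam M (Phi s (x s)) \<and> fam_norm M (Phi s (x s)) \<le> LL Lm * fam_norm M (x s)"
      by (rule Phi_bnd[OF xs]) (use Lm s in auto)
    have "norm (Phi s (x s) i j) \<le> fam_norm M (Phi s (x s))" using fam_comp[where u="Phi s (x s)" and i=i and j=j] P i by simp
    also have "\<dots> \<le> LL Lm * fam_norm M (x s)" using P by simp
    also have "\<dots> \<le> LL Lm * B" using B s LL0 by (intro mult_left_mono) auto
    finally show "norm (Phi s (x s) i j) \<le> LL Lm * B" .
  qed auto
qed

end



lemma int_sum_abs_le:
  fixes g :: "'k \<Rightarrow> real \<Rightarrow> real"
  assumes F: "finite F" and gi: "\<And>k. k \<in> F \<Longrightarrow> g k absolutely_integrable_on S"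
    and h: "h integrable_on S"
    and le: "\<And>s. s \<in> S \<Longrightarrow> (\<Sum>k\<in>F. \<bar>g k s\<bar>) \<le> h s"
  shows "(\<Sum>k\<in>F. \<bar>integral S (g k)\<bar>) \<le> integral S h"
proof -
  have i1: "g k integrable_on S" and i2: "(\<lambda>s. \<bar>g k s\<bar>) integrable_on S" if "k \<in> F" for k
    using gi[OF that] by (auto simp: absolutely_integrable_on_def)
  have "(\<Sum>k\<in>F. \<bar>integral S (g k)\<bar>) \<le> (\<Sum>k\<in>F. integral S (\<lambda>s. \<bar>g k s\<bar>))"
  proof (rule sum_mono)
    fix k assume k: "k \<in> F"
    show "\<bar>integral S (g k)\<bar> \<le> integral S (\<lambda>s. \<bar>g k s\<bar>)"
      using integral_norm_bound_integral[OF i1[OF k] i2[OF k]] by simp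
  qed
  also have "\<dots> = integral S (\<lambda>s. \<Sum>k\<in>F. \<bar>g k s\<bar>)"
    by (rule integral_sum[symmetric, OF F i2])
  also have "\<dots> \<le> integral S h"
    by (rule integral_le[OF integrable_sum[OF F i2] h le])
  finally show ?thesis .
qed

lemma fam_add_summ:
  assumes "summable_fam M u" "summable_fam M v"
  shows "summable_fam M (\<lambda>i j. u i j + v i j)"
proof -
  have "summable_fam M (\<lambda>i j. u i j - (0 - v i j))"
    by (rule fam_diff_summ[OF assms(1)]) (use assms(2) in \<open>simp add: summable_fam_def\<close>)
  then show ?thesis by simp
qed

lemma fam_norm_cong:
  assumes "\<And>i j. i \<le> M \<Longrightarrow> u i j = v i j"
  shows "fam_norm M u = fam_norm M v"
  unfolding fam_norm_def using assms by (intro sum.cong refl) auto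

lemma summ_cong:
  assumes "\<And>i j. i \<le> M \<Longrightarrow> u i j = v i j" "summable_fam M v"
  shows "summable_fam M u"
  using assms unfolding summable_fam_def by auto

lemma P0_summ: "summable_fam M (P0 x0 y0)"
  unfolding summable_fam_def P0_def
proof (intro allI impI)
  fix i :: nat
  have "(\<lambda>j. \<bar>if i = x0 \<and> j = y0 then 1 else 0\<bar>) = (\<lambda>j. if j = y0 then (if i = x0 then 1 else 0) else 0 :: real)"
    by auto
  then show "summable (\<lambda>j. \<bar>if i = x0 \<and> j = y0 then 1 else 0 :: real\<bar>)"
    using summable_single[of y0 "\<lambda>_. if i = x0 then 1 else 0::real"] by simp
qed

lemma P0_norm: "x0 \<le> M \<Longrightarrow> fam_norm M (P0 x0 y0) = 1"
proof -
  assume x0: "x0 \<le> M"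
  have e: "(\<Sum>j. \<bar>P0 x0 y0 i j\<bar>) = (if i = x0 then 1 else 0)" for i
  proof -
    have "(\<lambda>j. \<bar>P0 x0 y0 i j\<bar>) = (\<lambda>j. if j = y0 then (if i = x0 then 1 else 0) else 0 :: real)"
      by (auto simp: P0_def)
    then show ?thesis using sums_unique[OF sums_single[of y0 "\<lambda>_. if i = x0 then 1 else 0::real"]] by simp
  qed
  show ?thesis unfolding fam_norm_def e using x0 by simp
qed

context sys
begin

lemma good_const: "summable_fam M u \<Longrightarrow> good (\<lambda>t. u)"
  by (simp add: good_def fam_norm_def)

abbreviation Z :: "real \<Rightarrow> fam" where "Z \<equiv> (\<lambda>t i j. 0)"

lemma good_Z: "good Z" by (rule good_const[OF zero_summ])

lemma Phi_int_sub:
  assumes g: "good x" and i: "i \<le> M" and a: "0 \<le> a" and ab: "a \<le> b"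
  shows "(\<lambda>s. Phi s (x s) i j) absolutely_integrable_on {a..b}"
  by (rule absolutely_integrable_on_subinterval[OF Phi_int[OF g i, of b]]) (use a ab in auto)

lemma int_lip:
  assumes gx: "good x" and gy: "good y" and a: "0 \<le> a" and ab: "a \<le> b" and T: "b \<le> T"
    and lam: "\<forall>s\<in>{0..T}. \<forall>k\<le>M. 0 \<le> lam s k \<and> lam s k \<le> Lm"
    and h: "h integrable_on {a..b}"
    and hle: "\<And>s. s \<in> {a..b} \<Longrightarrow> LL Lm * fam_norm M (\<lambda>i j. x s i j - y s i j) \<le> h s"
  shows "summable_fam M (\<lambda>i j. integral {a..b} (\<lambda>s. Phi s (x s) i j) - integral {a..b} (\<lambda>s. Phi s (y s) i j)) \<and>
    fam_norm M (\<lambda>i j. integral {a..b} (\<lambda>s. Phi s (x s) i j) - integral {a..b} (\<lambda>s. Phi s (y s) i j)) \<le> integral {a..b} h"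
proof -
  define g where "g = (\<lambda>(i::nat,j::nat) s. Phi s (x s) i j - Phi s (y s) i j)"
  have gi: "g k absolutely_integrable_on {a..b}" if "k \<in> {..M} \<times> {..<N}" for k N
  proof -
    obtain i j where k: "k = (i,j)" by (cases k)
    have i: "i \<le> M" using that k by auto
    show ?thesis unfolding k g_def
      using set_integral_diff(1)[OF Phi_int_sub[OF gx i a ab, of j] Phi_int_sub[OF gy i a ab, of j]]
      by simp
  qed
  have ie: "integral {a..b} (\<lambda>s. Phi s (x s) i j) - integral {a..b} (\<lambda>s. Phi s (y s) i j) = integral {a..b} (g (i,j))"
    if i: "i \<le> M" for i j
    unfolding g_def
    using integral_diff[of "\<lambda>s. Phi s (x s) i j" "{a..b}" "\<lambda>s. Phi s (y s) i j"]
      Phi_int_sub[OF gx i a ab, of j] Phi_int_sub[OF gy i a ab, of j]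
    by (simp add: absolutely_integrable_on_def)
  have "(\<Sum>i\<le>M. \<Sum>j<N. \<bar>integral {a..b} (\<lambda>s. Phi s (x s) i j) - integral {a..b} (\<lambda>s. Phi s (y s) i j)\<bar>)
      \<le> integral {a..b} h" for N
  proof -
    have "(\<Sum>i\<le>M. \<Sum>j<N. \<bar>integral {a..b} (\<lambda>s. Phi s (x s) i j) - integral {a..b} (\<lambda>s. Phi s (y s) i j)\<bar>)
        = (\<Sum>i\<le>M. \<Sum>j<N. \<bar>integral {a..b} (g (i,j))\<bar>)"
      using ie by (intro sum.cong refl) auto
    also have "\<dots> = (\<Sum>k\<in>{..M} \<times> {..<N}. \<bar>integral {a..b} (g k)\<bar>)"
      by (simp add: sum.cartesian_product)
    also have "\<dots> \<le> integral {a..b} h"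
    proof (rule int_sum_abs_le[OF _ gi h])
      fix s assume s: "s \<in> {a..b}"
      then have s0: "0 \<le> s" "s \<le> T" using a T by auto
      have xs: "summable_fam M (x s)" and ys: "summable_fam M (y s)" using gx gy s0 by (auto simp: good_def)
      have P: "summable_fam M (\<lambda>i j. Phi s (x s) i j - Phi s (y s) i j) \<and>
         fam_norm M (\<lambda>i j. Phi s (x s) i j - Phi s (y s) i j) \<le> LL Lm * fam_norm M (\<lambda>i j. x s i j - y s i j)"
        by (rule Phi_lip[OF xs ys]) (use lam s0 in auto)
      have "(\<Sum>k\<in>{..M} \<times> {..<N}. \<bar>g k s\<bar>) = (\<Sum>i\<le>M. \<Sum>j<N. \<bar>Phi s (x s) i j - Phi s (y s) i j\<bar>)"
        by (simp add: sum.cartesian_product g_def case_prod_beta)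
      also have "\<dots> \<le> fam_norm M (\<lambda>i j. Phi s (x s) i j - Phi s (y s) i j)"
        using fam_partial[of M "\<lambda>i j. Phi s (x s) i j - Phi s (y s) i j" N] P by simp
      also have "\<dots> \<le> h s" using P hle[OF s] by linarith
      finally show "(\<Sum>k\<in>{..M} \<times> {..<N}. \<bar>g k s\<bar>) \<le> h s" .
    qed auto
    finally show ?thesis .
  qed
  then show ?thesis
    using fam_bound[where u="\<lambda>i j. integral {a..b} (\<lambda>s. Phi s (x s) i j) - integral {a..b} (\<lambda>s. Phi s (y s) i j)"]
    by blast
qed

lemma int_bnd:
  assumes gx: "good x" and a: "0 \<le> a" and ab: "a \<le> b" and T: "b \<le> T"
    and lam: "\<forall>s\<in>{0..T}. \<forall>k\<le>M. 0 \<le> lam s k \<and> lam s k \<le> Lm"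
    and h: "h integrable_on {a..b}"
    and hle: "\<And>s. s \<in> {a..b} \<Longrightarrow> LL Lm * fam_norm M (x s) \<le> h s"
  shows "summable_fam M (\<lambda>i j. integral {a..b} (\<lambda>s. Phi s (x s) i j)) \<and>
    fam_norm M (\<lambda>i j. integral {a..b} (\<lambda>s. Phi s (x s) i j)) \<le> integral {a..b} h"
  using int_lip[OF gx good_Z a ab T lam h] hle by (simp add: Phi_zero)

definition TT :: "(real \<Rightarrow> fam) \<Rightarrow> real \<Rightarrow> fam" where
  "TT x = (\<lambda>t i j. P0 x0 y0 i j + integral {0..t} (\<lambda>s. Phi s (x s) i j))"

lemma TT_diff:
  assumes g: "good x" and i: "i \<le> M" and a: "0 \<le> a" and ab: "a \<le> b"
  shows "TT x b i j - TT x a i j = integral {a..b} (\<lambda>s. Phi s (x s) i j)"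
proof -
  have "(\<lambda>s. Phi s (x s) i j) integrable_on {0..b}"
    using Phi_int[OF g i, of b] a ab by (simp add: absolutely_integrable_on_def)
  from Henstock_Kurzweil_Integration.integral_combine[OF a ab this] show ?thesis by (simp add: TT_def)
qed

lemma TT_good:
  assumes g: "good x"
  shows "good (TT x)"
proof -
  have bnd: "\<exists>K. \<forall>a b. 0 \<le> a \<longrightarrow> a \<le> b \<longrightarrow> b \<le> T \<longrightarrow>
       summable_fam M (\<lambda>i j. integral {a..b} (\<lambda>s. Phi s (x s) i j)) \<and>
       fam_norm M (\<lambda>i j. integral {a..b} (\<lambda>s. Phi s (x s) i j)) \<le> K * (b - a)" if T: "0 < T" for T
  proof -
    obtain Lm where Lm: "0 \<le> Lm" "\<forall>s\<in>{0..T}. \<forall>k\<le>M. 0 \<le> lam s k \<and> lam s k \<le> Lm"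
      using lam_bnd[OF T] by auto
    obtain B where B: "\<forall>s\<in>{0..T}. fam_norm M (x s) \<le> B" using nrm_bounded[OF g] by blast
    show ?thesis
    proof (intro exI allI impI)
      fix a b :: real assume a: "0 \<le> a" and ab: "a \<le> b" and bT: "b \<le> T"
      have "summable_fam M (\<lambda>i j. integral {a..b} (\<lambda>s. Phi s (x s) i j)) \<and>
       fam_norm M (\<lambda>i j. integral {a..b} (\<lambda>s. Phi s (x s) i j)) \<le> integral {a..b} (\<lambda>s. LL Lm * B)"
        by (rule int_bnd[OF g a ab bT Lm(2) integrable_const_ivl])
           (use B a bT LL_nonneg[OF Lm(1)] in \<open>auto intro: mult_left_mono\<close>)
      then show "summable_fam M (\<lambda>i j. integral {a..b} (\<lambda>s. Phi s (x s) i j)) \<and>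
       fam_norm M (\<lambda>i j. integral {a..b} (\<lambda>s. Phi s (x s) i j)) \<le> LL Lm * B * (b - a)"
        using ab by (simp add: mult_ac)
    qed
  qed
  have summ: "summable_fam M (TT x t)" if t: "0 \<le> t" for t
  proof -
    obtain K where K: "\<forall>a b. 0 \<le> a \<longrightarrow> a \<le> b \<longrightarrow> b \<le> t + 1 \<longrightarrow>
       summable_fam M (\<lambda>i j. integral {a..b} (\<lambda>s. Phi s (x s) i j)) \<and>
       fam_norm M (\<lambda>i j. integral {a..b} (\<lambda>s. Phi s (x s) i j)) \<le> K * (b - a)"
      using bnd[of "t+1"] t by auto
    have "summable_fam M (\<lambda>i j. integral {0..t} (\<lambda>s. Phi s (x s) i j))" using K t by auto
    from fam_add_summ[OF P0_summ this] show ?thesis by (simp add: TT_def)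
  qed
  have cont: "((\<lambda>s. fam_norm M (\<lambda>i j. TT x s i j - TT x t i j)) \<longlongrightarrow> 0) (at t within {0..})" if t: "0 \<le> t" for t
  proof -
    obtain K where K: "\<forall>a b. 0 \<le> a \<longrightarrow> a \<le> b \<longrightarrow> b \<le> t + 1 \<longrightarrow>
       summable_fam M (\<lambda>i j. integral {a..b} (\<lambda>s. Phi s (x s) i j)) \<and>
       fam_norm M (\<lambda>i j. integral {a..b} (\<lambda>s. Phi s (x s) i j)) \<le> K * (b - a)"
      using bnd[of "t+1"] t by auto
    have le: "fam_norm M (\<lambda>i j. TT x s i j - TT x t i j) \<le> K * \<bar>s - t\<bar>" if s: "0 \<le> s" "s \<le> t + 1" for s
    proof (cases "t \<le> s")
      case True
      have "fam_norm M (\<lambda>i j. TT x s i j - TT x t i j) = fam_norm M (\<lambda>i j. integral {t..s} (\<lambda>s. Phi s (x s) i j))"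
        by (rule fam_norm_cong) (rule TT_diff[OF g _ t True])
      also have "\<dots> \<le> K * (s - t)" using K t True s by auto
      finally show ?thesis using True by simp
    next
      case False
      have "fam_norm M (\<lambda>i j. TT x s i j - TT x t i j) = fam_norm M (\<lambda>i j. TT x t i j - TT x s i j)"
        by (rule fam_norm_sym)
      also have "\<dots> = fam_norm M (\<lambda>i j. integral {s..t} (\<lambda>s. Phi s (x s) i j))"
        by (rule fam_norm_cong, rule TT_diff[OF g _ s(1)]) (use False in auto)
      also have "\<dots> \<le> K * (t - s)" using K t False s by auto
      finally show ?thesis using False by simp
    qed
    have G0: "((\<lambda>s. K * \<bar>s - t\<bar>) \<longlongrightarrow> K * \<bar>t - t\<bar>) (at t within {0..})"
      by (intro tendsto_intros)
    have ev: "eventually (\<lambda>s. s < t + 1) (at t within {0..})"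
      by (rule order_tendstoD(2)[OF tendsto_ident_at]) simp
    show ?thesis
    proof (rule Lim_null_comparison[where g="\<lambda>s. K * \<bar>s - t\<bar>"])
      show "eventually (\<lambda>s. norm (fam_norm M (\<lambda>i j. TT x s i j - TT x t i j)) \<le> K * \<bar>s - t\<bar>) (at t within {0..})"
      proof -
      have ev2: "eventually (\<lambda>s. s \<in> {0..}) (at t within {0..})" unfolding eventually_at_filter by simp
      show ?thesis using eventually_conj[OF ev ev2]
      proof (rule eventually_mono)
        fix s assume "s < t + 1 \<and> s \<in> {0..}"
        then have "s < t + 1" "s \<in> {0..}" by auto
        moreover have "summable_fam M (\<lambda>i j. TT x s i j - TT x t i j)"
          using summ[of s] summ[OF t] calculation by (intro fam_diff_summ) auto
        ultimately show "norm (fam_norm M (\<lambda>i j. TT x s i j - TT x t i j)) \<le> K * \<bar>s - t\<bar>"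
          using le[of s] fam_norm_nonneg by simp
      qed
      qed
      show "((\<lambda>s. K * \<bar>s - t\<bar>) \<longlongrightarrow> 0) (at t within {0..})" using G0 by simp
    qed
  qed
  show ?thesis unfolding good_def using summ cont by auto
qed

end



lemma poly_int:
  fixes c L t :: real
  assumes t: "0 \<le> t"
  shows "((\<lambda>s. c * (L * (L * s)^n / fact n)) has_integral c * ((L * t)^(Suc n) / fact (Suc n))) {0..t}"
proof -
  have d: "((\<lambda>s. c * ((L * s)^(Suc n) / fact (Suc n))) has_real_derivative c * (L * (L * s)^n / fact n)) (at s)" for s
  proof -
    define K where "K = c * L^(Suc n) / fact (Suc n)"
    have "((\<lambda>s. s ^ Suc n) has_real_derivative real (Suc n) * s ^ n) (at s)"
      using DERIV_pow[of "Suc n" s] by simp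
    then have "((\<lambda>s. K * s ^ Suc n) has_real_derivative K * (real (Suc n) * s ^ n)) (at s)"
      by (rule DERIV_cmult)
    moreover have "(\<lambda>s. K * s ^ Suc n) = (\<lambda>s. c * ((L * s)^(Suc n) / fact (Suc n)))"
      by (simp add: K_def power_mult_distrib fun_eq_iff)
    moreover have "K * (real (Suc n) * s ^ n) = c * (L * (L * s)^n / fact n)"
      unfolding K_def by (simp add: power_mult_distrib fact_Suc field_simps del: of_nat_Suc)
    ultimately show ?thesis by simp
  qed
  have "((\<lambda>s. c * (L * (L * s)^n / fact n)) has_integral
      (c * ((L * t)^(Suc n) / fact (Suc n)) - c * ((L * 0)^(Suc n) / fact (Suc n)))) {0..t}"
  proof (rule fundamental_theorem_of_calculus[OF t])
    fix x assume "x \<in> {0..t}"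
    show "((\<lambda>s. c * ((L * s)^(Suc n) / fact (Suc n))) has_vector_derivative c * (L * (L * x)^n / fact n)) (at x within {0..t})"
      using has_vector_derivative_at_within[OF d[of x, unfolded has_real_derivative_iff_has_vector_derivative]] .
  qed
  then show ?thesis by simp
qed

context sys
begin

primrec XX :: "nat \<Rightarrow> real \<Rightarrow> fam" where
  "XX 0 = (\<lambda>t. P0 x0 y0)"
| "XX (Suc n) = TT (XX n)"

lemma XX_good: "good (XX n)"
  by (induction n) (auto intro: TT_good good_const P0_summ)

lemma XX_summ: "0 \<le> t \<Longrightarrow> summable_fam M (XX n t)"
  using XX_good[of n] by (auto simp: good_def)

lemma pic:
  assumes T: "0 < T" and Lm: "0 \<le> Lm" and lam: "\<forall>s\<in>{0..T}. \<forall>k\<le>M. 0 \<le> lam s k \<and> lam s k \<le> Lm"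
  shows "\<forall>t\<in>{0..T}. summable_fam M (\<lambda>i j. XX (Suc n) t i j - XX n t i j) \<and>
     fam_norm M (\<lambda>i j. XX (Suc n) t i j - XX n t i j) \<le> (LL Lm * t)^(Suc n) / fact (Suc n)"
proof (induction n)
  case 0
  show ?case
  proof
    fix t assume t: "t \<in> {0..T}"
    have e: "(\<lambda>i j. XX (Suc 0) t i j - XX 0 t i j) = (\<lambda>i j. integral {0..t} (\<lambda>s. Phi s (XX 0 s) i j))"
      by (simp add: TT_def fun_eq_iff)
    have "summable_fam M (\<lambda>i j. integral {0..t} (\<lambda>s. Phi s (XX 0 s) i j)) \<and>
      fam_norm M (\<lambda>i j. integral {0..t} (\<lambda>s. Phi s (XX 0 s) i j)) \<le> integral {0..t} (\<lambda>s. LL Lm)"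
      by (rule int_bnd[OF XX_good _ _ _ lam integrable_const_ivl]) (use t P0_norm[OF x0M] in auto)
    then show "summable_fam M (\<lambda>i j. XX (Suc 0) t i j - XX 0 t i j) \<and>
     fam_norm M (\<lambda>i j. XX (Suc 0) t i j - XX 0 t i j) \<le> (LL Lm * t)^(Suc 0) / fact (Suc 0)"
      unfolding e using t by (simp add: mult.commute)
  qed
next
  case (Suc n)
  show ?case
  proof
    fix t assume t: "t \<in> {0..T}"
    have e: "(\<lambda>i j. XX (Suc (Suc n)) t i j - XX (Suc n) t i j) =
      (\<lambda>i j. integral {0..t} (\<lambda>s. Phi s (XX (Suc n) s) i j) - integral {0..t} (\<lambda>s. Phi s (XX n s) i j))"
      by (simp add: TT_def fun_eq_iff)
    have PI: "((\<lambda>s. 1 * (LL Lm * (LL Lm * s)^(Suc n) / fact (Suc n))) has_integral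
       1 * ((LL Lm * t)^(Suc (Suc n)) / fact (Suc (Suc n)))) {0..t}"
      by (rule poly_int) (use t in auto)
    have "summable_fam M (\<lambda>i j. integral {0..t} (\<lambda>s. Phi s (XX (Suc n) s) i j) - integral {0..t} (\<lambda>s. Phi s (XX n s) i j)) \<and>
      fam_norm M (\<lambda>i j. integral {0..t} (\<lambda>s. Phi s (XX (Suc n) s) i j) - integral {0..t} (\<lambda>s. Phi s (XX n s) i j))
      \<le> integral {0..t} (\<lambda>s. 1 * (LL Lm * (LL Lm * s)^(Suc n) / fact (Suc n)))"
    proof (rule int_lip[OF XX_good XX_good _ _ _ lam])
      show "(\<lambda>s. 1 * (LL Lm * (LL Lm * s)^(Suc n) / fact (Suc n))) integrable_on {0..t}"
        using PI by blast
      fix s assume s: "s \<in> {0..t}"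
      then have "s \<in> {0..T}" using t by auto
      then have "fam_norm M (\<lambda>i j. XX (Suc n) s i j - XX n s i j) \<le> (LL Lm * s)^(Suc n) / fact (Suc n)"
        using Suc.IH by blast
      then show "LL Lm * fam_norm M (\<lambda>i j. XX (Suc n) s i j - XX n s i j) \<le> 1 * (LL Lm * (LL Lm * s)^(Suc n) / fact (Suc n))"
        using LL_nonneg[OF Lm] by (simp add: mult_left_mono divide_inverse mult.assoc)
    qed (use t in auto)
    then show "summable_fam M (\<lambda>i j. XX (Suc (Suc n)) t i j - XX (Suc n) t i j) \<and>
     fam_norm M (\<lambda>i j. XX (Suc (Suc n)) t i j - XX (Suc n) t i j) \<le> (LL Lm * t)^(Suc (Suc n)) / fact (Suc (Suc n))"
      unfolding e using integral_unique[OF PI] by simp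
  qed
qed

end

definition aa :: "real \<Rightarrow> nat \<Rightarrow> real" where "aa c k = c^(Suc k) / fact (Suc k)"

lemma aa_summ: "summable (aa c)"
proof -
  have "summable (\<lambda>n. inverse (fact (Suc n)) * c^(Suc n))"
    using summable_exp[of c] summable_Suc_iff[of "\<lambda>n. inverse (fact n) * c^n"] by simp
  then show ?thesis unfolding aa_def by (simp add: divide_inverse mult.commute)
qed

lemma aa_nonneg: "0 \<le> c \<Longrightarrow> 0 \<le> aa c k" by (simp add: aa_def)

lemma aa_mono: "0 \<le> c \<Longrightarrow> c \<le> d \<Longrightarrow> aa c k \<le> aa d k"
  unfolding aa_def by (intro divide_right_mono power_mono) auto

definition ee :: "real \<Rightarrow> nat \<Rightarrow> real" where "ee c n = (\<Sum>k. aa c (k + n))"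

lemma ee_bnd:
  assumes c: "0 \<le> c" and nm: "n \<le> m"
  shows "(\<Sum>k\<in>{n..<m}. aa c k) \<le> ee c n"
proof -
  have "(\<Sum>k\<in>{n..<m}. aa c k) = (\<Sum>k\<in>{0..<m-n}. aa c (k + n))"
    using sum.shift_bounds_nat_ivl[of "aa c" 0 n "m - n"] nm by simp
  also have "\<dots> \<le> ee c n" unfolding ee_def
    by (rule sum_le_suminf) (use aa_summ summable_ignore_initial_segment aa_nonneg[OF c] in auto)
  finally show ?thesis .
qed

lemma ee_lim: "(\<lambda>n. ee c n) \<longlonglongrightarrow> 0"
proof -
  have e: "ee c n = (\<Sum>k. aa c k) - (\<Sum>i<n. aa c i)" for n
    unfolding ee_def by (rule suminf_minus_initial_segment[OF aa_summ])
  have "(\<lambda>n. (\<Sum>k. aa c k) - (\<Sum>i<n. aa c i)) \<longlonglongrightarrow> (\<Sum>k. aa c k) - (\<Sum>k. aa c k)"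
    by (intro tendsto_diff tendsto_const summable_LIMSEQ aa_summ)
  then show ?thesis unfolding e by simp
qed

lemma ee_nonneg: "0 \<le> c \<Longrightarrow> 0 \<le> ee c n"
  unfolding ee_def by (rule suminf_nonneg) (use aa_summ summable_ignore_initial_segment aa_nonneg in auto)

context sys
begin

definition Xl :: "real \<Rightarrow> fam" where
  "Xl t i j = P0 x0 y0 i j + (\<Sum>k. XX (Suc k) t i j - XX k t i j)"

lemma XX_tel: "XX n t i j = P0 x0 y0 i j + (\<Sum>k<n. XX (Suc k) t i j - XX k t i j)"
  by (induction n) (auto simp: TT_def)

lemma diff_bnd:
  assumes T: "0 < T" and Lm: "0 \<le> Lm" and lam: "\<forall>s\<in>{0..T}. \<forall>k\<le>M. 0 \<le> lam s k \<and> lam s k \<le> Lm"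
    and t: "t \<in> {0..T}"
  shows "summable_fam M (\<lambda>i j. XX (Suc k) t i j - XX k t i j) \<and>
     fam_norm M (\<lambda>i j. XX (Suc k) t i j - XX k t i j) \<le> aa (LL Lm * T) k"
proof -
  have P: "summable_fam M (\<lambda>i j. XX (Suc k) t i j - XX k t i j) \<and>
     fam_norm M (\<lambda>i j. XX (Suc k) t i j - XX k t i j) \<le> (LL Lm * t)^(Suc k) / fact (Suc k)"
    using pic[OF T Lm lam] t by blast
  have "aa (LL Lm * t) k \<le> aa (LL Lm * T) k"
    using t LL_nonneg[OF Lm] by (intro aa_mono mult_left_mono) auto
  moreover have "(LL Lm * t)^(Suc k) / fact (Suc k) = aa (LL Lm * t) k" by (simp only: aa_def)
  ultimately show ?thesis using P by linarith
qed

lemma XX_conv: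
  assumes t: "0 \<le> t" and i: "i \<le> M"
  shows "(\<lambda>n. XX n t i j) \<longlonglongrightarrow> Xl t i j"
proof -
  obtain Lm where Lm: "0 \<le> Lm" "\<forall>s\<in>{0..t+1}. \<forall>k\<le>M. 0 \<le> lam s k \<and> lam s k \<le> Lm"
    using lam_bnd[of "t+1"] t by auto
  have s: "summable (\<lambda>k. XX (Suc k) t i j - XX k t i j)"
  proof (rule summable_comparison_test[OF _ aa_summ[of "LL Lm * (t+1)"]])
    show "\<exists>N. \<forall>n\<ge>N. norm (XX (Suc n) t i j - XX n t i j) \<le> aa (LL Lm * (t + 1)) n"
    proof (intro exI allI impI)
      fix n :: nat
      have D: "summable_fam M (\<lambda>i j. XX (Suc n) t i j - XX n t i j) \<and>
        fam_norm M (\<lambda>i j. XX (Suc n) t i j - XX n t i j) \<le> aa (LL Lm * (t+1)) n"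
        by (rule diff_bnd[OF _ Lm]) (use t in auto)
      have "\<bar>XX (Suc n) t i j - XX n t i j\<bar> \<le> fam_norm M (\<lambda>i j. XX (Suc n) t i j - XX n t i j)"
        by (rule fam_comp[where M=M and u="\<lambda>i j. XX (Suc n) t i j - XX n t i j" and i=i and j=j]) (use D i in auto)
      then show "norm (XX (Suc n) t i j - XX n t i j) \<le> aa (LL Lm * (t + 1)) n"
        using D by simp
    qed
  qed
  have e: "(\<lambda>n. XX n t i j) = (\<lambda>n. P0 x0 y0 i j + (\<Sum>k<n. XX (Suc k) t i j - XX k t i j))"
    by (rule ext) (rule XX_tel)
  show ?thesis unfolding e Xl_def
    by (intro tendsto_add tendsto_const summable_LIMSEQ s)
qed

lemma XX_tail:
  assumes T: "0 < T" and Lm: "0 \<le> Lm" and lam: "\<forall>s\<in>{0..T}. \<forall>k\<le>M. 0 \<le> lam s k \<and> lam s k \<le> Lm"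
    and t: "t \<in> {0..T}" and nm: "n \<le> m"
  shows "summable_fam M (\<lambda>i j. XX m t i j - XX n t i j) \<and>
     fam_norm M (\<lambda>i j. XX m t i j - XX n t i j) \<le> (\<Sum>k\<in>{n..<m}. aa (LL Lm * T) k)"
  using nm
proof (induction m rule: dec_induct)
  case base
  then show ?case by (simp add: fam_norm_def summable_fam_def)
next
  case (step m)
  have t0: "0 \<le> t" using t by simp
  have D: "summable_fam M (\<lambda>i j. XX (Suc m) t i j - XX m t i j) \<and>
        fam_norm M (\<lambda>i j. XX (Suc m) t i j - XX m t i j) \<le> aa (LL Lm * T) m"
    by (rule diff_bnd[OF T Lm lam t])
  have "fam_norm M (\<lambda>i j. XX (Suc m) t i j - XX n t i j) \<le>
      fam_norm M (\<lambda>i j. XX (Suc m) t i j - XX m t i j) + fam_norm M (\<lambda>i j. XX m t i j - XX n t i j)"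
    by (rule fam_tri[OF XX_summ[OF t0] XX_summ[OF t0] XX_summ[OF t0]])
  also have "\<dots> \<le> aa (LL Lm * T) m + (\<Sum>k\<in>{n..<m}. aa (LL Lm * T) k)"
    using D step.IH by linarith
  also have "\<dots> = (\<Sum>k\<in>{n..<Suc m}. aa (LL Lm * T) k)"
    using step.hyps by simp
  finally show ?case using fam_diff_summ[OF XX_summ[OF t0] XX_summ[OF t0]] by blast
qed

lemma Xl_tail:
  assumes T: "0 < T" and Lm: "0 \<le> Lm" and lam: "\<forall>s\<in>{0..T}. \<forall>k\<le>M. 0 \<le> lam s k \<and> lam s k \<le> Lm"
    and t: "t \<in> {0..T}"
  shows "summable_fam M (\<lambda>i j. Xl t i j - XX n t i j) \<and>
     fam_norm M (\<lambda>i j. Xl t i j - XX n t i j) \<le> ee (LL Lm * T) n"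
proof -
  have c0: "0 \<le> LL Lm * T" using LL_nonneg[OF Lm] T by simp
  have t0: "0 \<le> t" using t by simp
  have "(\<Sum>i\<le>M. \<Sum>j<N. \<bar>Xl t i j - XX n t i j\<bar>) \<le> ee (LL Lm * T) n" for N
  proof (rule LIMSEQ_le_const2)
    show "(\<lambda>m. \<Sum>i\<le>M. \<Sum>j<N. \<bar>XX m t i j - XX n t i j\<bar>) \<longlonglongrightarrow> (\<Sum>i\<le>M. \<Sum>j<N. \<bar>Xl t i j - XX n t i j\<bar>)"
      by (intro tendsto_sum tendsto_rabs tendsto_diff tendsto_const XX_conv[OF t0]) auto
    show "\<exists>N0. \<forall>m\<ge>N0. (\<Sum>i\<le>M. \<Sum>j<N. \<bar>XX m t i j - XX n t i j\<bar>) \<le> ee (LL Lm * T) n"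
    proof (intro exI allI impI)
      fix m assume nm: "n \<le> m"
      have X: "summable_fam M (\<lambda>i j. XX m t i j - XX n t i j) \<and>
         fam_norm M (\<lambda>i j. XX m t i j - XX n t i j) \<le> (\<Sum>k\<in>{n..<m}. aa (LL Lm * T) k)"
        by (rule XX_tail[OF T Lm lam t nm])
      have "(\<Sum>i\<le>M. \<Sum>j<N. \<bar>XX m t i j - XX n t i j\<bar>) \<le> fam_norm M (\<lambda>i j. XX m t i j - XX n t i j)"
        using fam_partial[where u="\<lambda>i j. XX m t i j - XX n t i j" and N=N] X by simp
      also have "\<dots> \<le> ee (LL Lm * T) n" using X ee_bnd[OF c0 nm] by linarith
      finally show "(\<Sum>i\<le>M. \<Sum>j<N. \<bar>XX m t i j - XX n t i j\<bar>) \<le> ee (LL Lm * T) n" .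
    qed
  qed
  then show ?thesis using fam_bound[where u="\<lambda>i j. Xl t i j - XX n t i j"] by blast
qed

end



context sys
begin

lemma Xl_summ:
  assumes t: "0 \<le> t"
  shows "summable_fam M (Xl t)"
proof -
  obtain Lm where Lm: "0 \<le> Lm" "\<forall>s\<in>{0..t+1}. \<forall>k\<le>M. 0 \<le> lam s k \<and> lam s k \<le> Lm"
    using lam_bnd[of "t+1"] t by auto
  have A: "summable_fam M (\<lambda>i j. Xl t i j - XX 0 t i j)"
    using Xl_tail[OF _ Lm(1) Lm(2), of t 0] t by auto
  have "summable_fam M (\<lambda>i j. (Xl t i j - XX 0 t i j) + XX 0 t i j)"
    by (rule fam_add_summ[OF A XX_summ[OF t]])
  then show ?thesis by simp
qed

lemma Xl_good: "good Xl"
  unfolding good_def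
proof (intro conjI allI impI)
  fix t :: real assume t: "0 \<le> t"
  show "summable_fam M (Xl t)" by (rule Xl_summ[OF t])
  obtain Lm where Lm: "0 \<le> Lm" "\<forall>s\<in>{0..t+1}. \<forall>k\<le>M. 0 \<le> lam s k \<and> lam s k \<le> Lm"
    using lam_bnd[of "t+1"] t by auto
  define c where "c = LL Lm * (t + 1)"
  show "((\<lambda>s. fam_norm M (\<lambda>i j. Xl s i j - Xl t i j)) \<longlongrightarrow> 0) (at t within {0..})"
    unfolding tendsto_iff
  proof (intro allI impI)
    fix e :: real assume e: "0 < e"
    have "eventually (\<lambda>n. ee c n < e / 3) sequentially"
      using order_tendstoD(2)[OF ee_lim[of c], of "e/3"] e by simp
    then obtain n where n: "ee c n < e / 3" by (auto simp: eventually_sequentially)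
    have "((\<lambda>s. fam_norm M (\<lambda>i j. XX n s i j - XX n t i j)) \<longlongrightarrow> 0) (at t within {0..})"
      using XX_good[of n] t by (auto simp: good_def)
    then have ev1: "eventually (\<lambda>s. fam_norm M (\<lambda>i j. XX n s i j - XX n t i j) < e / 3) (at t within {0..})"
      using e by (intro order_tendstoD(2)) auto
    have ev: "eventually (\<lambda>s. s < t + 1) (at t within {0..})"
      by (rule order_tendstoD(2)[OF tendsto_ident_at]) simp
    have ev2: "eventually (\<lambda>s. s \<in> {0..}) (at t within {0..})" unfolding eventually_at_filter by simp
    show "eventually (\<lambda>s. dist (fam_norm M (\<lambda>i j. Xl s i j - Xl t i j)) 0 < e) (at t within {0..})"
      using eventually_conj[OF ev1 eventually_conj[OF ev ev2]]
    proof (rule eventually_mono)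
      fix s assume H: "fam_norm M (\<lambda>i j. XX n s i j - XX n t i j) < e / 3 \<and> s < t + 1 \<and> s \<in> {0..}"
      then have s0: "0 \<le> s" and s1: "s \<in> {0..t+1}" by auto
      have t1: "t \<in> {0..t+1}" using t by auto
      have Ts: "fam_norm M (\<lambda>i j. Xl s i j - XX n s i j) \<le> ee c n"
        using Xl_tail[OF _ Lm(1) Lm(2) s1, of n] t unfolding c_def by auto
      have Tt: "fam_norm M (\<lambda>i j. Xl t i j - XX n t i j) \<le> ee c n"
        using Xl_tail[OF _ Lm(1) Lm(2) t1, of n] t unfolding c_def by auto
      have "fam_norm M (\<lambda>i j. Xl s i j - Xl t i j) \<le> fam_norm M (\<lambda>i j. Xl s i j - XX n s i j) + fam_norm M (\<lambda>i j. XX n s i j - Xl t i j)"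
        by (rule fam_tri[OF Xl_summ[OF s0] XX_summ[OF s0] Xl_summ[OF t]])
      also have "fam_norm M (\<lambda>i j. XX n s i j - Xl t i j) \<le> fam_norm M (\<lambda>i j. XX n s i j - XX n t i j) + fam_norm M (\<lambda>i j. XX n t i j - Xl t i j)"
        by (rule fam_tri[OF XX_summ[OF s0] XX_summ[OF t] Xl_summ[OF t]])
      finally have "fam_norm M (\<lambda>i j. Xl s i j - Xl t i j) < e"
        using Ts Tt H n fam_norm_sym[of M "\<lambda>i j. XX n t i j" "Xl t"] by linarith
      moreover have "0 \<le> fam_norm M (\<lambda>i j. Xl s i j - Xl t i j)"
        by (rule fam_norm_nonneg[OF fam_diff_summ[OF Xl_summ[OF s0] Xl_summ[OF t]]])
      ultimately show "dist (fam_norm M (\<lambda>i j. Xl s i j - Xl t i j)) 0 < e" by simp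
    qed
  qed
qed

lemma Xl_fix:
  assumes t: "0 \<le> t" and i: "i \<le> M"
  shows "Xl t i j = P0 x0 y0 i j + integral {0..t} (\<lambda>s. Phi s (Xl s) i j)"
proof -
  obtain Lm where Lm: "0 \<le> Lm" "\<forall>s\<in>{0..t+1}. \<forall>k\<le>M. 0 \<le> lam s k \<and> lam s k \<le> Lm"
    using lam_bnd[of "t+1"] t by auto
  define c where "c = LL Lm * (t + 1)"
  have A: "(\<lambda>n. XX (Suc n) t i j) \<longlonglongrightarrow> Xl t i j"
    using LIMSEQ_Suc[OF XX_conv[OF t i]] .
  have e: "XX (Suc n) t i j = P0 x0 y0 i j + integral {0..t} (\<lambda>s. Phi s (XX n s) i j)" for n
    by (simp add: TT_def)
  have bnd: "\<bar>integral {0..t} (\<lambda>s. Phi s (XX n s) i j) - integral {0..t} (\<lambda>s. Phi s (Xl s) i j)\<bar>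
      \<le> LL Lm * ee c n * t" for n
  proof -
    have P: "summable_fam M (\<lambda>i j. integral {0..t} (\<lambda>s. Phi s (XX n s) i j) - integral {0..t} (\<lambda>s. Phi s (Xl s) i j)) \<and>
      fam_norm M (\<lambda>i j. integral {0..t} (\<lambda>s. Phi s (XX n s) i j) - integral {0..t} (\<lambda>s. Phi s (Xl s) i j))
      \<le> integral {0..t} (\<lambda>s. LL Lm * ee c n)"
    proof (rule int_lip[OF XX_good Xl_good _ _ _ Lm(2) integrable_const_ivl])
      fix s assume s: "s \<in> {0..t}"
      then have s1: "s \<in> {0..t+1}" by auto
      have "fam_norm M (\<lambda>i j. Xl s i j - XX n s i j) \<le> ee c n"
        using Xl_tail[OF _ Lm(1) Lm(2) s1, of n] t unfolding c_def by auto
      then show "LL Lm * fam_norm M (\<lambda>i j. XX n s i j - Xl s i j) \<le> LL Lm * ee c n"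
        using fam_norm_sym[of M "XX n s" "Xl s"] LL_nonneg[OF Lm(1)] by (simp add: mult_left_mono)
    qed (use t in auto)
    have "\<bar>integral {0..t} (\<lambda>s. Phi s (XX n s) i j) - integral {0..t} (\<lambda>s. Phi s (Xl s) i j)\<bar>
        \<le> fam_norm M (\<lambda>i j. integral {0..t} (\<lambda>s. Phi s (XX n s) i j) - integral {0..t} (\<lambda>s. Phi s (Xl s) i j))"
      by (rule fam_comp[where M=M and i=i and j=j]) (use P i in auto)
    also have "\<dots> \<le> LL Lm * ee c n * t" using P t by (simp add: mult_ac)
    finally show ?thesis .
  qed
  have "((\<lambda>n. LL Lm * ee c n * t) \<longlongrightarrow> LL Lm * 0 * t) sequentially"
    by (intro tendsto_mult tendsto_const ee_lim)
  then have L0: "((\<lambda>n. LL Lm * ee c n * t) \<longlongrightarrow> 0) sequentially" by simp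
  have "(\<lambda>n. integral {0..t} (\<lambda>s. Phi s (XX n s) i j) - integral {0..t} (\<lambda>s. Phi s (Xl s) i j)) \<longlonglongrightarrow> 0"
  proof (rule Lim_null_comparison[OF _ L0])
    show "eventually (\<lambda>n. norm (integral {0..t} (\<lambda>s. Phi s (XX n s) i j) - integral {0..t} (\<lambda>s. Phi s (Xl s) i j))
       \<le> LL Lm * ee c n * t) sequentially"
    proof (rule always_eventually, rule allI)
      fix n show "norm (integral {0..t} (\<lambda>s. Phi s (XX n s) i j) - integral {0..t} (\<lambda>s. Phi s (Xl s) i j))
       \<le> LL Lm * ee c n * t" using bnd[of n] by (simp only: real_norm_def)
    qed
  qed
  then have B: "(\<lambda>n. integral {0..t} (\<lambda>s. Phi s (XX n s) i j)) \<longlonglongrightarrow> integral {0..t} (\<lambda>s. Phi s (Xl s) i j)"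
    by (rule LIM_zero_cancel)
  have "(\<lambda>n. XX (Suc n) t i j) \<longlonglongrightarrow> P0 x0 y0 i j + integral {0..t} (\<lambda>s. Phi s (Xl s) i j)"
    unfolding e by (intro tendsto_add tendsto_const B)
  then show ?thesis using A LIMSEQ_unique by blast
qed

end



context sys
begin

lemma Phi_nonneg_at:
  assumes x: "summable_fam M x" and i: "i \<le> M" and xij: "x i j \<le> 0" and s: "0 \<le> s"
  shows "0 \<le> Phi s x i j"
proof -
  have p0: "pp x i j = 0" using xij by (simp add: pp_def)
  have A: "0 \<le> Ap (mu i) (pp x i) j"
    by (rule qmat.Ap_nonneg[OF qm[OF i] nsl_abs[OF pp_nsl[OF x i]]]) (use xij in \<open>auto simp: pp_def\<close>)
  have B: "0 \<le> (if 1 \<le> i then lam s (i-1) * f (real j) * (pp x (i-1) j * hh f (pp x (i-1))) else 0)"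
  proof (cases "1 \<le> i")
    case True
    have i1: "i - 1 \<le> M" using i by simp
    have "0 \<le> lam s (i-1)" by (rule lam_nonneg[OF s i1])
    moreover have "0 \<le> pp x (i-1) j" by (simp add: pp_def)
    moreover have "0 \<le> hh f (pp x (i-1))" using hh_bnd[OF pp_nsl[OF x i1]] by simp
    ultimately show ?thesis using True f_pos by simp
  qed simp
  have C: "(if i \<le> M-1 then lam s i * f (real j) * (pp x i j * hh f (pp x i)) else 0) = 0"
    using p0 by simp
  have "Phi s x i j = Ap (mu i) (pp x i) j
   + (if 1 \<le> i then lam s (i-1) * f (real j) * (pp x (i-1) j * hh f (pp x (i-1))) else 0)
   - (if i \<le> M-1 then lam s i * f (real j) * (pp x i j * hh f (pp x i)) else 0)"
    by (simp only: Phi_def Psi_eq)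
  then show ?thesis using A B C by linarith
qed

lemma Xl_0: "Xl 0 i j = P0 x0 y0 i j" if "i \<le> M"
  using Xl_fix[of 0 i j] that by simp

lemma Xl_nonneg:
  assumes t: "0 \<le> t" and i: "i \<le> M"
  shows "0 \<le> Xl t i j"
proof (rule ccontr)
  assume neg: "\<not> 0 \<le> Xl t i j"
  define u where "u s = Xl s i j" for s
  have uc: "continuous_on {0..} u" unfolding u_def by (rule comp_cont[OF Xl_good i])
  define S where "S = {s \<in> {0..t}. 0 \<le> u s}"
  have S0: "0 \<in> S" using t i by (simp add: S_def u_def Xl_0 P0_def)
  have Sc: "closed S" unfolding S_def
    by (rule continuous_on_closed_Collect_le[OF continuous_on_const continuous_on_subset[OF uc]]) auto
  have Sb: "bdd_above S" unfolding S_def by (rule bdd_aboveI[of _ t]) auto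
  define s0 where "s0 = Sup S"
  have s0S: "s0 \<in> S" unfolding s0_def using closed_contains_Sup[OF _ Sb Sc] S0 by auto
  have s0t: "0 \<le> s0" "s0 \<le> t" and us0: "0 \<le> u s0" using s0S by (auto simp: S_def)
  have s0ne: "s0 \<noteq> t" using s0S neg by (auto simp: S_def u_def)
  have after: "u s < 0" if "s0 < s" "s \<le> t" for s
  proof (rule ccontr)
    assume "\<not> u s < 0"
    then have "s \<in> S" using that s0t by (auto simp: S_def)
    then have "s \<le> s0" unfolding s0_def by (rule cSup_upper[OF _ Sb])
    then show False using that by simp
  qed
  have us0': "u s0 \<le> 0"
  proof (rule ccontr)
    assume pos: "\<not> u s0 \<le> 0"
    have "(u \<longlongrightarrow> u s0) (at s0 within {0..})"
      using uc s0t unfolding continuous_on_def by auto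
    then have "eventually (\<lambda>s. 0 < u s) (at s0 within {0..})"
      using pos by (intro order_tendstoD(1)) auto
    then obtain d where d: "d > 0" "\<And>s. s \<in> {0..} \<Longrightarrow> s \<noteq> s0 \<and> dist s s0 < d \<Longrightarrow> 0 < u s"
      unfolding eventually_at by blast
    define s where "s = min (s0 + d/2) t"
    have "s0 < s" "s \<le> t" using d s0t s0ne by (auto simp: s_def)
    moreover have "0 < u s" using d s0t \<open>s0 < s\<close> \<open>s \<le> t\<close>
      by (intro d(2)) (auto simp: s_def dist_real_def)
    ultimately show False using after by fastforce
  qed
  have ints: "(\<lambda>s. Phi s (Xl s) i j) integrable_on {0..t}"
    using Phi_int[OF Xl_good i t] by (simp add: absolutely_integrable_on_def)
  have comb: "integral {0..s0} (\<lambda>s. Phi s (Xl s) i j) + integral {s0..t} (\<lambda>s. Phi s (Xl s) i j)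
      = integral {0..t} (\<lambda>s. Phi s (Xl s) i j)"
    by (rule Henstock_Kurzweil_Integration.integral_combine[OF s0t ints])
  have "0 \<le> integral {s0..t} (\<lambda>s. Phi s (Xl s) i j)"
  proof (rule integral_nonneg)
    show "(\<lambda>s. Phi s (Xl s) i j) integrable_on {s0..t}"
      using Phi_int_sub[OF Xl_good i s0t(1) s0t(2)] by (simp add: absolutely_integrable_on_def)
    fix s assume s: "s \<in> {s0..t}"
    have s0': "0 \<le> s" using s s0t by auto
    have "Xl s i j \<le> 0"
    proof (cases "s = s0")
      case True then show ?thesis using us0' by (simp add: u_def)
    next
      case False then show ?thesis using after[of s] s by (auto simp: u_def)
    qed
    then show "0 \<le> Phi s (Xl s) i j" by (rule Phi_nonneg_at[OF Xl_summ[OF s0'] i _ s0'])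
  qed
  moreover have "Xl t i j = Xl s0 i j + integral {s0..t} (\<lambda>s. Phi s (Xl s) i j)"
    using Xl_fix[OF t i, of j] Xl_fix[OF s0t(1) i, of j] comb by simp
  ultimately have "Xl s0 i j \<le> Xl t i j" by simp
  then show False using us0 neg by (simp add: u_def)
qed

end



lemma tele:
  fixes c :: "nat \<Rightarrow> real"
  assumes "1 \<le> M"
  shows "(\<Sum>i\<le>M. (if 1 \<le> i then c (i-1) else 0) - (if i \<le> M-1 then c i else 0)) = 0"
proof -
  obtain m where m: "M = Suc m" using assms by (cases M) auto
  have 1: "(\<Sum>i\<le>M. if 1 \<le> i then c (i-1) else 0) = (\<Sum>i\<le>m. c i)"
    unfolding m by (subst sum.atMost_Suc_shift) simp
  have 2: "(\<Sum>i\<le>M. if i \<le> M-1 then c i else 0) = (\<Sum>i\<le>m. c i)"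
    unfolding m by (simp add: sum.atMost_Suc)
  show ?thesis using 1 2 by (simp add: sum_subtractf)
qed

lemma P0_sums: "(\<lambda>j. P0 x0 y0 i j) sums (if i = x0 then 1 else 0)"
proof -
  have "(\<lambda>j. P0 x0 y0 i j) = (\<lambda>j. if j = y0 then (if i = x0 then 1 else 0) else 0 :: real)"
    by (auto simp: P0_def)
  then show ?thesis using sums_single[of y0 "\<lambda>_. if i = x0 then 1 else 0::real"] by simp
qed

context sys
begin

lemma Psi_local:
  assumes yz: "\<And>i' j. i' \<le> M \<Longrightarrow> y i' j = z i' j" and i: "i \<le> M"
  shows "Psi M lam f mu s y i j = Psi M lam f mu s z i j"
proof -
  have 1: "y i = z i" using yz i by auto
  have 2: "y (i-1) = z (i-1)" using yz i by auto
  show ?thesis by (simp only: Psi_eq 1 2)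
qed

lemma Phi_Xl:
  assumes s: "0 \<le> s" and i: "i \<le> M"
  shows "Phi s (Xl s) i j = Psi M lam f mu s (Xl s) i j"
  unfolding Phi_def
  by (rule Psi_local[OF _ i]) (use Xl_nonneg[OF s] in \<open>auto simp: pp_def\<close>)

lemma Psi_sums:
  assumes y: "summable_fam M y" and yn: "\<And>i' j. i' \<le> M \<Longrightarrow> 0 \<le> y i' j" and i: "i \<le> M"
  shows "(\<lambda>j. Psi M lam f mu s y i j) sums
    ((if 1 \<le> i then lam s (i-1) * (\<Sum>l. y (i-1) l) else 0) - (if i \<le> M-1 then lam s i * (\<Sum>l. y i l) else 0))"
proof -
  have ns: "nsl (y k)" if "k \<le> M" for k
    using y yn that by (auto simp: nsl_def summable_fam_def intro: summable_rabs_cancel)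
  have A: "(\<lambda>j. Ap (mu i) (y i) j) sums 0"
  proof -
    have "summable (\<lambda>j. \<bar>Ap (mu i) (y i) j\<bar>)"
      using qmat.Ap_lip[OF qm[OF i] nsl_abs[OF ns[OF i]]] by blast
    then have "summable (\<lambda>j. Ap (mu i) (y i) j)" by (rule summable_rabs_cancel)
    then show ?thesis using qmat.Ap_sum0[OF qm[OF i] nsl_abs[OF ns[OF i]]]
      by (metis summable_sums)
  qed
  have mass: "(\<lambda>j. lam s k * f (real j) * (y k j * hh f (y k))) sums (lam s k * (\<Sum>l. y k l))" if "k \<le> M" for k
    using sums_mult[OF hh_mass[OF ns[OF that]], of "lam s k"] by (simp add: mult.assoc)
  have B: "(\<lambda>j. if 1 \<le> i then lam s (i-1) * f (real j) * (y (i-1) j * hh f (y (i-1))) else 0) sums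
      (if 1 \<le> i then lam s (i-1) * (\<Sum>l. y (i-1) l) else 0)"
    using mass[of "i-1"] i by (cases "1 \<le> i") auto
  have C: "(\<lambda>j. if i \<le> M-1 then lam s i * f (real j) * (y i j * hh f (y i)) else 0) sums
      (if i \<le> M-1 then lam s i * (\<Sum>l. y i l) else 0)"
    using mass[of i] i by (cases "i \<le> M-1") auto
  have "(\<lambda>j. Ap (mu i) (y i) j
   + (if 1 \<le> i then lam s (i-1) * f (real j) * (y (i-1) j * hh f (y (i-1))) else 0)
   - (if i \<le> M-1 then lam s i * f (real j) * (y i j * hh f (y i)) else 0)) sums
    (0 + (if 1 \<le> i then lam s (i-1) * (\<Sum>l. y (i-1) l) else 0) - (if i \<le> M-1 then lam s i * (\<Sum>l. y i l) else 0))"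
    by (intro sums_diff sums_add A B C)
  then show ?thesis by (simp only: Psi_eq) simp
qed

definition GG :: "nat \<Rightarrow> real \<Rightarrow> real" where
  "GG i s = (if 1 \<le> i then lam s (i-1) * (\<Sum>l. Xl s (i-1) l) else 0) - (if i \<le> M-1 then lam s i * (\<Sum>l. Xl s i l) else 0)"

lemma Phi_Xl_sums:
  assumes s: "0 \<le> s" and i: "i \<le> M"
  shows "(\<lambda>j. Phi s (Xl s) i j) sums GG i s"
  unfolding Phi_Xl[OF s i] GG_def
  by (rule Psi_sums[OF Xl_summ[OF s] Xl_nonneg[OF s] i])

lemma int_sums:
  assumes t: "0 \<le> t" and i: "i \<le> M"
  shows "GG i integrable_on {0..t} \<and> (\<lambda>j. integral {0..t} (\<lambda>s. Phi s (Xl s) i j)) sums integral {0..t} (GG i)"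
proof -
  obtain Lm where Lm: "0 \<le> Lm" "\<forall>s\<in>{0..t+1}. \<forall>k\<le>M. 0 \<le> lam s k \<and> lam s k \<le> Lm"
    using lam_bnd[of "t+1"] t by auto
  obtain B where B: "\<forall>s\<in>{0..t}. fam_norm M (Xl s) \<le> B" using nrm_bounded[OF Xl_good] by blast
  have ints: "(\<lambda>s. Phi s (Xl s) i j) integrable_on {0..t}" for j
    using Phi_int[OF Xl_good i t] by (simp add: absolutely_integrable_on_def)
  define F where "F N s = (\<Sum>j<N. Phi s (Xl s) i j)" for N s
  have Fi: "F N integrable_on {0..t}" for N
    unfolding F_def by (rule integrable_sum) (auto intro: ints)
  have Fle: "norm (F N s) \<le> LL Lm * B" if s: "s \<in> {0..t}" for N s
  proof -
    have s0: "0 \<le> s" using s by simp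
    have P: "summable_fam M (Phi s (Xl s)) \<and> fam_norm M (Phi s (Xl s)) \<le> LL Lm * fam_norm M (Xl s)"
      by (rule Phi_bnd[OF Xl_summ[OF s0]]) (use Lm s in auto)
    have sl: "summable (\<lambda>j. \<bar>Phi s (Xl s) i j\<bar>)" using P i by (simp add: summable_fam_def)
    have "norm (F N s) \<le> (\<Sum>j<N. \<bar>Phi s (Xl s) i j\<bar>)" unfolding F_def by (simp add: sum_abs)
    also have "\<dots> \<le> (\<Sum>j. \<bar>Phi s (Xl s) i j\<bar>)" by (rule sum_le_suminf[OF sl]) auto
    also have "\<dots> \<le> fam_norm M (Phi s (Xl s))" using lvl_le[of "Phi s (Xl s)" i] P i by simp
    also have "\<dots> \<le> LL Lm * fam_norm M (Xl s)" using P by simp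
    also have "\<dots> \<le> LL Lm * B" using B s LL_nonneg[OF Lm(1)] by (intro mult_left_mono) auto
    finally show ?thesis .
  qed
  have Fc: "(\<lambda>N. F N s) \<longlonglongrightarrow> GG i s" if s: "s \<in> {0..t}" for s
    unfolding F_def using Phi_Xl_sums[of s i] s i by (simp add: sums_def)
  have D1: "GG i integrable_on {0..t}"
    by (rule dominated_convergence(1)[OF Fi integrable_const_ivl Fle Fc])
  have D2: "(\<lambda>N. integral {0..t} (F N)) \<longlonglongrightarrow> integral {0..t} (GG i)"
    by (rule dominated_convergence(2)[OF Fi integrable_const_ivl Fle Fc])
  have "integral {0..t} (F N) = (\<Sum>j<N. integral {0..t} (\<lambda>s. Phi s (Xl s) i j))" for N
    unfolding F_def by (rule integral_sum) (auto intro: ints)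
  then show ?thesis using D1 D2 by (simp add: sums_def)
qed

lemma Xl_mass:
  assumes t: "0 \<le> t"
  shows "fam_norm M (Xl t) = 1"
proof -
  have lv: "(\<lambda>j. Xl t i j) sums ((if i = x0 then 1 else 0) + integral {0..t} (GG i))" if i: "i \<le> M" for i
  proof -
    have "(\<lambda>j. P0 x0 y0 i j + integral {0..t} (\<lambda>s. Phi s (Xl s) i j)) sums ((if i = x0 then 1 else 0) + integral {0..t} (GG i))"
      using sums_add[OF P0_sums int_sums[OF t i, THEN conjunct2]] by simp
    moreover have "(\<lambda>j. Xl t i j) = (\<lambda>j. P0 x0 y0 i j + integral {0..t} (\<lambda>s. Phi s (Xl s) i j))"
      using Xl_fix[OF t i] by auto
    ultimately show ?thesis by simp
  qed
  have "fam_norm M (Xl t) = (\<Sum>i\<le>M. \<Sum>j. Xl t i j)"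
    unfolding fam_norm_def using Xl_nonneg[OF t] by (intro sum.cong refl) auto
  also have "\<dots> = (\<Sum>i\<le>M. (if i = x0 then 1 else 0) + integral {0..t} (GG i))"
  proof (rule sum.cong[OF refl])
    fix i assume "i \<in> {..M}"
    then show "(\<Sum>j. Xl t i j) = (if i = x0 then 1 else 0) + integral {0..t} (GG i)"
      using sums_unique[OF lv[of i]] by simp
  qed
  also have "\<dots> = 1 + (\<Sum>i\<le>M. integral {0..t} (GG i))"
    using x0M by (simp add: sum.distrib)
  also have "(\<Sum>i\<le>M. integral {0..t} (GG i)) = integral {0..t} (\<lambda>s. \<Sum>i\<le>M. GG i s)"
    by (rule integral_sum[symmetric]) (use int_sums[OF t] in auto)
  also have "\<dots> = integral {0..t} (\<lambda>s. 0)"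
  proof (rule integral_cong)
    fix s show "(\<Sum>i\<le>M. GG i s) = 0" unfolding GG_def by (rule tele[OF M1])
  qed
  finally show ?thesis by simp
qed

end



context sys
begin

lemma sol_good: "is_solution M lam f mu x0 y0 Q \<Longrightarrow> good Q"
  by (simp add: is_solution_def good_def)

lemma sol_fix:
  assumes Q: "is_solution M lam f mu x0 y0 Q" and t: "0 \<le> t" and i: "i \<le> M"
  shows "Q t i j = P0 x0 y0 i j + integral {0..t} (\<lambda>s. Phi s (Q s) i j)"
proof -
  have HI: "((\<lambda>s. Psi M lam f mu s (Q s) i j) has_integral (Q t i j - P0 x0 y0 i j)) {0..t}"
    using Q t i by (simp add: is_solution_def)
  have "((\<lambda>s. Phi s (Q s) i j) has_integral (Q t i j - P0 x0 y0 i j)) {0..t}"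
  proof (subst has_integral_cong)
    fix s assume s: "s \<in> {0..t}"
    have nn: "nonneg_fam M (Q s)" using Q s by (simp add: is_solution_def)
    show "Phi s (Q s) i j = Psi M lam f mu s (Q s) i j"
      unfolding Phi_def by (rule Psi_local[OF _ i]) (use nn in \<open>auto simp: pp_def nonneg_fam_def\<close>)
  qed (rule HI)
  then have "integral {0..t} (\<lambda>s. Phi s (Q s) i j) = Q t i j - P0 x0 y0 i j" by (rule integral_unique)
  then show ?thesis by simp
qed

lemma uniq:
  assumes Q: "is_solution M lam f mu x0 y0 Q" and t: "0 \<le> t" and i: "i \<le> M"
  shows "Q t i j = Xl t i j"
proof -
  have gQ: "good Q" by (rule sol_good[OF Q])
  obtain Lm where Lm: "0 \<le> Lm" "\<forall>s\<in>{0..t+1}. \<forall>k\<le>M. 0 \<le> lam s k \<and> lam s k \<le> Lm"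
    using lam_bnd[of "t+1"] t by auto
  define L where "L = LL Lm"
  have L0: "0 \<le> L" unfolding L_def by (rule LL_nonneg[OF Lm(1)])
  obtain BQ where BQ: "\<forall>s\<in>{0..t+1}. fam_norm M (Q s) \<le> BQ" using nrm_bounded[OF gQ] by blast
  obtain BX where BX: "\<forall>s\<in>{0..t+1}. fam_norm M (Xl s) \<le> BX" using nrm_bounded[OF Xl_good] by blast
  define D where "D = BQ + BX"
  have Qs: "summable_fam M (Q s)" if "0 \<le> s" for s using gQ that by (simp add: good_def)
  have dD: "fam_norm M (\<lambda>i j. Q s i j - Xl s i j) \<le> D" if s: "s \<in> {0..t+1}" for s
  proof -
    have s0: "0 \<le> s" using s by simp
    have "fam_norm M (\<lambda>i j. Q s i j - Xl s i j) \<le> fam_norm M (\<lambda>i j. Q s i j - 0) + fam_norm M (\<lambda>i j. 0 - Xl s i j)"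
      by (rule fam_tri[OF Qs[OF s0] zero_summ Xl_summ[OF s0]])
    also have "fam_norm M (\<lambda>i j. 0 - Xl s i j) = fam_norm M (Xl s)" by (simp add: fam_norm_def)
    moreover have "fam_norm M (\<lambda>i j. Q s i j - 0) = fam_norm M (Q s)" by simp
    moreover have "fam_norm M (Q s) \<le> BQ" using BQ s by blast
    moreover have "fam_norm M (Xl s) \<le> BX" using BX s by blast
    ultimately show ?thesis unfolding D_def by linarith
  qed
  have G: "\<forall>s\<in>{0..t+1}. fam_norm M (\<lambda>i j. Q s i j - Xl s i j) \<le> D * ((L * s)^n / fact n)" for n
  proof (induction n)
    case 0 then show ?case using dD by simp
  next
    case (Suc n)
    show ?case
    proof
      fix s assume s: "s \<in> {0..t+1}"
      have s0: "0 \<le> s" using s by simp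
      have e: "fam_norm M (\<lambda>i j. Q s i j - Xl s i j) = fam_norm M (\<lambda>i j. integral {0..s} (\<lambda>s. Phi s (Q s) i j) - integral {0..s} (\<lambda>s. Phi s (Xl s) i j))"
      proof (rule fam_norm_cong)
        fix i j :: nat assume i: "i \<le> M"
        show "Q s i j - Xl s i j = integral {0..s} (\<lambda>s. Phi s (Q s) i j) - integral {0..s} (\<lambda>s. Phi s (Xl s) i j)"
          using sol_fix[OF Q s0 i, of j] Xl_fix[OF s0 i, of j] by linarith
      qed
      have PI: "((\<lambda>r. D * (L * (L * r)^n / fact n)) has_integral D * ((L * s)^(Suc n) / fact (Suc n))) {0..s}"
        by (rule poly_int[OF s0])
      have "summable_fam M (\<lambda>i j. integral {0..s} (\<lambda>s. Phi s (Q s) i j) - integral {0..s} (\<lambda>s. Phi s (Xl s) i j)) \<and>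
         fam_norm M (\<lambda>i j. integral {0..s} (\<lambda>s. Phi s (Q s) i j) - integral {0..s} (\<lambda>s. Phi s (Xl s) i j))
          \<le> integral {0..s} (\<lambda>r. D * (L * (L * r)^n / fact n))"
      proof (rule int_lip[OF gQ Xl_good _ _ _ Lm(2)])
        show "(\<lambda>r. D * (L * (L * r)^n / fact n)) integrable_on {0..s}" using PI by blast
        fix r assume r: "r \<in> {0..s}"
        then have "r \<in> {0..t+1}" using s by auto
        then have "fam_norm M (\<lambda>i j. Q r i j - Xl r i j) \<le> D * ((L * r)^n / fact n)" using Suc.IH by blast
        then have "L * fam_norm M (\<lambda>i j. Q r i j - Xl r i j) \<le> L * (D * ((L * r)^n / fact n))"
          using mult_left_mono[OF _ L0] by blast
        then show "LL Lm * fam_norm M (\<lambda>i j. Q r i j - Xl r i j) \<le> D * (L * (L * r)^n / fact n)"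
          unfolding L_def by (simp add: mult_ac)
      qed (use s in auto)
      then show "fam_norm M (\<lambda>i j. Q s i j - Xl s i j) \<le> D * ((L * s)^(Suc n) / fact (Suc n))"
        unfolding e using integral_unique[OF PI] by simp
    qed
  qed
  have lim: "(\<lambda>n. D * ((L * t)^n / fact n)) \<longlonglongrightarrow> D * 0"
  proof (rule tendsto_mult[OF tendsto_const])
    have "(\<lambda>n. inverse (fact n) * (L * t)^n) \<longlonglongrightarrow> 0"
      by (rule summable_LIMSEQ_zero[OF summable_exp])
    then show "(\<lambda>n. (L * t)^n / fact n) \<longlonglongrightarrow> 0" by (simp add: divide_inverse mult.commute)
  qed
  have t1: "t \<in> {0..t+1}" using t by simp
  have "fam_norm M (\<lambda>i j. Q t i j - Xl t i j) \<le> D * 0"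
  proof (rule LIMSEQ_le_const[OF lim])
    show "\<exists>N. \<forall>n\<ge>N. fam_norm M (\<lambda>i j. Q t i j - Xl t i j) \<le> D * ((L * t)^n / fact n)"
      using G t1 by blast
  qed
  moreover have "\<bar>Q t i j - Xl t i j\<bar> \<le> fam_norm M (\<lambda>i j. Q t i j - Xl t i j)"
    by (rule fam_comp[where M=M and i=i and j=j]) (use fam_diff_summ[OF Qs[OF t] Xl_summ[OF t]] i in auto)
  ultimately show ?thesis by simp
qed

lemma Xl_solution: "is_solution M lam f mu x0 y0 Xl"
  unfolding is_solution_def
proof (intro conjI allI impI)
  fix t :: real assume t: "0 \<le> t"
  show "nonneg_fam M (Xl t)" using Xl_nonneg[OF t] by (simp add: nonneg_fam_def)
  show "summable_fam M (Xl t)" by (rule Xl_summ[OF t])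
  show "((\<lambda>s. fam_norm M (\<lambda>i j. Xl s i j - Xl t i j)) \<longlongrightarrow> 0) (at t within {0..})"
    using Xl_good t by (simp add: good_def)
next
  fix t :: real and i j assume t: "0 \<le> t" and i: "i \<le> M"
  have "((\<lambda>s. Phi s (Xl s) i j) has_integral integral {0..t} (\<lambda>s. Phi s (Xl s) i j)) {0..t}"
    by (rule integrable_integral) (use Phi_int[OF Xl_good i t] in \<open>simp add: absolutely_integrable_on_def\<close>)
  then have HX: "((\<lambda>s. Phi s (Xl s) i j) has_integral (Xl t i j - P0 x0 y0 i j)) {0..t}"
    using Xl_fix[OF t i, of j] by simp
  show "((\<lambda>s. Psi M lam f mu s (Xl s) i j) has_integral (Xl t i j - P0 x0 y0 i j)) {0..t}"
  proof (subst has_integral_cong[where g="\<lambda>s. Phi s (Xl s) i j"])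
    fix s assume "s \<in> {0..t}"
    then show "Psi M lam f mu s (Xl s) i j = Phi s (Xl s) i j" using Phi_Xl[of s i j] i by simp
  qed (rule HX)
qed

end


theorem theorem2:
  fixes M :: nat and x0 :: nat and y0 :: nat
    and lam :: "real \<Rightarrow> nat \<Rightarrow> real"
    and f :: "real \<Rightarrow> real"
    and mu :: "nat \<Rightarrow> nat \<Rightarrow> nat \<Rightarrow> real"
  assumes M_pos: "1 \<le> M"
    and x0: "x0 \<le> M"
    and lam_nonneg: "\<forall>t\<ge>0. \<forall>x\<le>M. 0 \<le> lam t x"
    and lam_right_cont: "\<forall>x\<le>M. \<forall>t\<ge>0. continuous (at_right t) (\<lambda>s. lam s x)"
    and lam_left_lim: "\<forall>x\<le>M. \<forall>t>0. \<exists>l. ((\<lambda>s. lam s x) \<longlongrightarrow> l) (at_left t)"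
    and lam_M: "\<forall>t\<ge>0. lam t M = 0"
    and lam_bdd: "\<forall>T>0. \<exists>C. \<forall>t\<in>{0..T}. \<forall>x\<le>M. \<bar>lam t x\<bar> \<le> C"
    and f_cont: "continuous_on UNIV f"
    and f_bounds: "\<exists>fl fu. 0 < fl \<and> (\<forall>x. fl \<le> f x \<and> f x \<le> fu)"
    and mu_offdiag: "\<forall>k\<le>M. \<forall>i j. i \<noteq> j \<longrightarrow> 0 \<le> mu k i j"
    and mu_diag: "\<forall>k\<le>M. \<forall>i. mu k i i \<le> 0"
    and mu_rows: "\<forall>k\<le>M. \<forall>i. (\<lambda>j. mu k i j) sums 0"
    and mu_bdd: "\<forall>k\<le>M. \<exists>C. \<forall>i. \<bar>mu k i i\<bar> \<le> C"
  shows "\<exists>P. is_solution M lam f mu x0 y0 P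
           \<and> (\<forall>t\<ge>0. nonneg_fam M (P t) \<and> fam_norm M (P t) = 1)
           \<and> (\<forall>Q. is_solution M lam f mu x0 y0 Q \<longrightarrow>
                  (\<forall>t\<ge>0. \<forall>i\<le>M. \<forall>j. Q t i j = P t i j))"
  proof -
  obtain fl fu where fl: "0 < fl" and fb: "\<forall>x. fl \<le> f x \<and> f x \<le> fu" using f_bounds by blast
  have "\<forall>k. \<exists>C. k \<le> M \<longrightarrow> (\<forall>i. \<bar>mu k i i\<bar> \<le> C)" using mu_bdd by blast
  then obtain Cf where Cf: "\<And>k. k \<le> M \<Longrightarrow> \<forall>i. \<bar>mu k i i\<bar> \<le> Cf k" by metis
  define C where "C = (\<Sum>k\<le>M. \<bar>Cf k\<bar>)"
  have CC: "\<bar>mu k i i\<bar> \<le> C" if k: "k \<le> M" for k i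
  proof -
    have "\<bar>mu k i i\<bar> \<le> \<bar>Cf k\<bar>" using Cf[OF k] by (meson abs_ge_self order_trans)
    also have "\<dots> \<le> C" unfolding C_def by (rule member_le_sum) (use k in auto)
    finally show ?thesis .
  qed
  interpret S: sys f fl fu M lam mu C x0 y0
  proof unfold_locales
    show "0 < fl" by (rule fl)
    show "fl \<le> f x" for x using fb by blast
    show "f x \<le> fu" for x using fb by blast
    show "1 \<le> M" by (rule M_pos)
    show "x0 \<le> M" by (rule x0)
    show "0 \<le> lam t x" if "0 \<le> t" "x \<le> M" for t x using lam_nonneg that by blast
    show "continuous (at_right t) (\<lambda>s. lam s x)" if "x \<le> M" "0 \<le> t" for x t
      using lam_right_cont that by blast
    show "\<exists>Lm. \<forall>t\<in>{0..T}. \<forall>x\<le>M. \<bar>lam t x\<bar> \<le> Lm" if "0 < T" for T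
      using lam_bdd that by blast
    show "0 \<le> mu k i j" if "k \<le> M" "i \<noteq> j" for k i j using mu_offdiag that by blast
    show "mu k i i \<le> 0" if "k \<le> M" for k i using mu_diag that by blast
    show "(\<lambda>j. mu k i j) sums 0" if "k \<le> M" for k i using mu_rows that by blast
    show "\<bar>mu k i i\<bar> \<le> C" if "k \<le> M" for k i using CC that by blast
  qed
  show ?thesis
  proof (intro exI conjI allI impI)
    show "is_solution M lam f mu x0 y0 S.Xl" by (rule S.Xl_solution)
    fix t :: real assume t: "0 \<le> t"
    show "nonneg_fam M (S.Xl t)" using S.Xl_nonneg[OF t] by (simp add: nonneg_fam_def)
    show "fam_norm M (S.Xl t) = 1" by (rule S.Xl_mass[OF t])
  next
    fix Q and t :: real and i j :: nat assume Q: "is_solution M lam f mu x0 y0 Q" and t: "0 \<le> t" and i: "i \<le> M"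
    show "Q t i j = S.Xl t i j" by (rule S.uniq[OF Q t i])
  qed
qed

end
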